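(* Assume each $K_n/k$ is a Galois extension and let $G=\mathrm{Gal}(K/k)$, acting on $K\subset\overline{K}$. Then for each $g\in G$ the map $g:K\to K\subset \overline{K}$ extends uniquely to a map $\overline{K}\to\overline{K}$ that is continuous with respect to the $*$-weak topology $\sigma(\overline{K},K)$ (the weakest topology making all functionals $y\mapsto\langle\xi,y\rangle$, $\xi\in K$, continuous), and these extensions define an action of $G$ on $\overline{K}$ by $*$-weakly continuous maps.
   Context: Let $k$ be a non-Archimedean local field of characteristic $0$, and let $k=K_1\subset K_2\subset\cdots$ be an increasing sequence of finite extensions, $K=\bigcup_n K_n$. Let $m_n=[K_n:k]$, $|\cdot|_n$ the normalized absolute value of $K_n$, $\|x\|=|x|_n^{1/m_n}$ for $x\in K_n$. For $n\le\nu$ and $x\in K_\nu$ put $T_n(x)=\frac{m_n}{m_\nu}\mathrm{Tr}_{K_\nu/K_n}(x)$ (independent of $\nu$); $T=T_1$. $\overline{K}$ is the set of sequences $y=(y_1,y_2,\dots)$, $y_n\in K_n$, with $y_n=T_n(y_\nu)$ for $\nu>n$, topologized by the seminorms $\|y\|_n=\|y_n\|$; $T_n(y):=y_n$, and $K$ is embedded in $\overline K$ via $x\mapsto(T_1(x),T_2(x),\dots)$. The pairing is $\langle\xi,y\rangle=T(\xi\,T_n(y))$ for $\xi\in K_n$, $y\in\overline{K}$. *)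

theory Defs
  imports "HOL-Analysis.Analysis"
begin

definition is_subfield :: "'a::field set \<Rightarrow> bool" where
  "is_subfield F \<longleftrightarrow> 0 \<in> F \<and> 1 \<in> F \<and>
     (\<forall>x\<in>F. \<forall>y\<in>F. x + y \<in> F \<and> x - y \<in> F \<and> x * y \<in> F) \<and>
     (\<forall>x\<in>F. x \<noteq> 0 \<longrightarrow> inverse x \<in> F)"

definition is_basis :: "'a::field set \<Rightarrow> 'a set \<Rightarrow> 'a list \<Rightarrow> bool" where
  "is_basis F L bs \<longleftrightarrow> set bs \<subseteq> L \<and>
     (\<forall>v\<in>L. \<exists>!c. (\<forall>i<length bs. c i \<in> F) \<and> (\<forall>i. length bs \<le> i \<longrightarrow> c i = 0) \<and>
                    v = (\<Sum>i<length bs. c i * bs ! i))"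

definition coords :: "'a::field set \<Rightarrow> 'a list \<Rightarrow> 'a \<Rightarrow> nat \<Rightarrow> 'a" where
  "coords F bs v = (THE c. (\<forall>i<length bs. c i \<in> F) \<and> (\<forall>i. length bs \<le> i \<longrightarrow> c i = 0) \<and>
                    v = (\<Sum>i<length bs. c i * bs ! i))"

definition finite_ext :: "'a::field set \<Rightarrow> 'a set \<Rightarrow> bool" where
  "finite_ext F L \<longleftrightarrow> is_subfield F \<and> is_subfield L \<and> F \<subseteq> L \<and> (\<exists>bs. is_basis F L bs)"

definition some_basis :: "'a::field set \<Rightarrow> 'a set \<Rightarrow> 'a list" where
  "some_basis F L = (SOME bs. is_basis F L bs)"

definition field_degree :: "'a::field set \<Rightarrow> 'a set \<Rightarrow> nat" where
  "field_degree F L = length (some_basis F L)"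

definition field_trace :: "'a::field set \<Rightarrow> 'a set \<Rightarrow> 'a \<Rightarrow> 'a" where
  "field_trace F L a = (let bs = some_basis F L in
      \<Sum>i<length bs. coords F bs (a * bs ! i) i)"

text \<open>Field automorphisms of L fixing F pointwise (only their values on L matter).\<close>
definition field_auts :: "'a::field set \<Rightarrow> 'a set \<Rightarrow> ('a \<Rightarrow> 'a) set" where
  "field_auts L F = {\<sigma>. bij_betw \<sigma> L L \<and> \<sigma> 1 = 1 \<and>
      (\<forall>x\<in>L. \<forall>y\<in>L. \<sigma> (x + y) = \<sigma> x + \<sigma> y \<and> \<sigma> (x * y) = \<sigma> x * \<sigma> y) \<and>
      (\<forall>x\<in>F. \<sigma> x = x)}"

definition galois_ext :: "'a::field set \<Rightarrow> 'a set \<Rightarrow> bool" where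
  "galois_ext F L \<longleftrightarrow> finite_ext F L \<and> {x\<in>L. \<forall>\<sigma>\<in>field_auts L F. \<sigma> x = x} = F"

definition nonarch_abs :: "'a::field set \<Rightarrow> ('a \<Rightarrow> real) \<Rightarrow> bool" where
  "nonarch_abs F av \<longleftrightarrow>
     (\<forall>x\<in>F. av x \<ge> 0 \<and> (av x = 0 \<longleftrightarrow> x = 0)) \<and>
     (\<forall>x\<in>F. \<forall>y\<in>F. av (x * y) = av x * av y \<and> av (x + y) \<le> max (av x) (av y))"

text \<open>F with the absolute value av is a non-Archimedean local field: the absolute value is
  non-Archimedean and nontrivial, F is complete, and the closed unit ball is (sequentially)
  compact, i.e. F is locally compact.\<close>
definition nonarch_local_field :: "'a::field set \<Rightarrow> ('a \<Rightarrow> real) \<Rightarrow> bool" where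
  "nonarch_local_field F av \<longleftrightarrow> is_subfield F \<and> nonarch_abs F av \<and>
     (\<exists>x\<in>F. av x \<noteq> 0 \<and> av x \<noteq> 1) \<and>
     (\<forall>s. (\<forall>j. s j \<in> F) \<longrightarrow> (\<forall>e>0. \<exists>N. \<forall>i\<ge>N. \<forall>j\<ge>N. av (s i - s j) < e) \<longrightarrow>
          (\<exists>L\<in>F. (\<lambda>j. av (s j - L)) \<longlonglongrightarrow> 0)) \<and>
     (\<forall>s. (\<forall>j. s j \<in> F \<and> av (s j) \<le> 1) \<longrightarrow>
          (\<exists>r L. strict_mono (r :: nat \<Rightarrow> nat) \<and> L \<in> F \<and> (\<lambda>j. av (s (r j) - L)) \<longlonglongrightarrow> 0))"

definition abs_topology :: "'a::field set \<Rightarrow> ('a \<Rightarrow> real) \<Rightarrow> 'a topology" where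
  "abs_topology F av = topology (\<lambda>U. U \<subseteq> F \<and>
      (\<forall>x\<in>U. \<exists>e>0. \<forall>y\<in>F. av (y - x) < e \<longrightarrow> y \<in> U))"

text \<open>Indices are shifted by one: Kt 0 = k is the paper's K_1, and Kt n is K_{n+1}.\<close>

definition tower_union :: "(nat \<Rightarrow> 'a set) \<Rightarrow> 'a set" where
  "tower_union Kt = (\<Union>n. Kt n)"

definition Tnu :: "(nat \<Rightarrow> 'a::field set) \<Rightarrow> nat \<Rightarrow> nat \<Rightarrow> 'a \<Rightarrow> 'a" where
  "Tnu Kt n \<nu> x = (of_nat (field_degree (Kt 0) (Kt n)) / of_nat (field_degree (Kt 0) (Kt \<nu>)))
                    * field_trace (Kt n) (Kt \<nu>) x"

text \<open>T_n on K, using the least admissible \<nu> (the value is independent of \<nu>).\<close>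
definition Tn :: "(nat \<Rightarrow> 'a::field set) \<Rightarrow> nat \<Rightarrow> 'a \<Rightarrow> 'a" where
  "Tn Kt n x = Tnu Kt n (LEAST \<nu>. n \<le> \<nu> \<and> x \<in> Kt \<nu>) x"

definition Kbar :: "(nat \<Rightarrow> 'a::field set) \<Rightarrow> (nat \<Rightarrow> 'a) set" where
  "Kbar Kt = {y. (\<forall>n. y n \<in> Kt n) \<and> (\<forall>n \<nu>. n < \<nu> \<longrightarrow> y n = Tnu Kt n \<nu> (y \<nu>))}"

definition embK :: "(nat \<Rightarrow> 'a::field set) \<Rightarrow> 'a \<Rightarrow> (nat \<Rightarrow> 'a)" where
  "embK Kt x = (\<lambda>n. Tn Kt n x)"

text \<open>The pairing \<langle>\<xi>,y\<rangle> = T(\<xi> T_n(y)) for \<xi> in K_n (least such n; independent of n).\<close>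
definition pairing :: "(nat \<Rightarrow> 'a::field set) \<Rightarrow> 'a \<Rightarrow> (nat \<Rightarrow> 'a) \<Rightarrow> 'a" where
  "pairing Kt \<xi> y = (let n = (LEAST n. \<xi> \<in> Kt n) in Tn Kt 0 (\<xi> * y n))"

definition weak_star_topology :: "(nat \<Rightarrow> 'a::field set) \<Rightarrow> ('a \<Rightarrow> real) \<Rightarrow> (nat \<Rightarrow> 'a) topology" where
  "weak_star_topology Kt av =
     pullback_topology (Kbar Kt)
       (\<lambda>y. restrict (\<lambda>\<xi>. pairing Kt \<xi> y) (tower_union Kt))
       (product_topology (\<lambda>_. abs_topology (Kt 0) av) (tower_union Kt))"

end

theory Submission
  imports Defs
begin


definition fbasis :: "'a::field set \<Rightarrow> 'a set \<Rightarrow> 'i set \<Rightarrow> ('i \<Rightarrow> 'a) \<Rightarrow> bool" where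
  "fbasis F L I b \<longleftrightarrow> finite I \<and> b ` I \<subseteq> L \<and>
     (\<forall>v\<in>L. \<exists>!c. (\<forall>i\<in>I. c i \<in> F) \<and> (\<forall>i. i \<notin> I \<longrightarrow> c i = 0) \<and> v = (\<Sum>i\<in>I. c i * b i))"

definition fcoords :: "'a::field set \<Rightarrow> 'i set \<Rightarrow> ('i \<Rightarrow> 'a) \<Rightarrow> 'a \<Rightarrow> 'i \<Rightarrow> 'a" where
  "fcoords F I b v = (THE c. (\<forall>i\<in>I. c i \<in> F) \<and> (\<forall>i. i \<notin> I \<longrightarrow> c i = 0) \<and> v = (\<Sum>i\<in>I. c i * b i))"

definition ftrace :: "'a::field set \<Rightarrow> 'i set \<Rightarrow> ('i \<Rightarrow> 'a) \<Rightarrow> 'a \<Rightarrow> 'a" where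
  "ftrace F I b x = (\<Sum>i\<in>I. fcoords F I b (x * b i) i)"

lemma is_basis_fbasis:
  "is_basis F L bs \<longleftrightarrow> fbasis F L {..<length bs} (\<lambda>i. bs ! i)"
  unfolding is_basis_def fbasis_def Ball_def lessThan_iff
  by (auto simp: set_conv_nth not_less)

lemma coords_fcoords: "coords F bs v = fcoords F {..<length bs} (\<lambda>i. bs ! i) v"
  unfolding coords_def fcoords_def Ball_def lessThan_iff by (simp add: not_less)

lemma fcoords:
  assumes "fbasis F L I b" "v \<in> L"
  shows "\<forall>i\<in>I. fcoords F I b v i \<in> F" "\<And>i. i \<notin> I \<Longrightarrow> fcoords F I b v i = 0"
    "v = (\<Sum>i\<in>I. fcoords F I b v i * b i)"
proof -
  let ?P = "\<lambda>c. (\<forall>i\<in>I. c i \<in> F) \<and> (\<forall>i. i \<notin> I \<longrightarrow> c i = 0) \<and> v = (\<Sum>i\<in>I. c i * b i)"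
  have "\<exists>!c. ?P c" using assms unfolding fbasis_def by blast
  then have "?P (fcoords F I b v)" unfolding fcoords_def by (rule theI')
  then show "\<forall>i\<in>I. fcoords F I b v i \<in> F" "\<And>i. i \<notin> I \<Longrightarrow> fcoords F I b v i = 0"
    "v = (\<Sum>i\<in>I. fcoords F I b v i * b i)" by auto
qed

lemma fcoords_unique:
  assumes "fbasis F L I b" "v \<in> L" "\<forall>i\<in>I. c i \<in> F" "\<And>i. i \<notin> I \<Longrightarrow> c i = 0"
    "v = (\<Sum>i\<in>I. c i * b i)"
  shows "fcoords F I b v = c"
proof -
  let ?P = "\<lambda>c. (\<forall>i\<in>I. c i \<in> F) \<and> (\<forall>i. i \<notin> I \<longrightarrow> c i = 0) \<and> v = (\<Sum>i\<in>I. c i * b i)"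
  have "\<exists>!c. ?P c" using assms unfolding fbasis_def by blast
  moreover have "?P c" using assms by auto
  ultimately show ?thesis unfolding fcoords_def using the1_equality[of ?P c] by blast
qed

lemma fcoords_unique_on:
  assumes "fbasis F L I b" "v \<in> L" "\<forall>i\<in>I. c i \<in> F" 
    "v = (\<Sum>i\<in>I. c i * b i)" "i \<in> I"
  shows "fcoords F I b v i = c i"
proof -
  have "fcoords F I b v = (\<lambda>i. if i \<in> I then c i else 0)"
    by (rule fcoords_unique[OF assms(1,2)]) (use assms in auto)
  then show ?thesis using assms(5) by simp
qed

lemma subfield_sum: "is_subfield F \<Longrightarrow> (\<And>i. i \<in> I \<Longrightarrow> f i \<in> F) \<Longrightarrow> sum f I \<in> F"
  unfolding is_subfield_def
  by (induction I rule: infinite_finite_induct) auto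

lemma subfield_mult: "is_subfield F \<Longrightarrow> x \<in> F \<Longrightarrow> y \<in> F \<Longrightarrow> x * y \<in> F"
  and subfield_add: "is_subfield F \<Longrightarrow> x \<in> F \<Longrightarrow> y \<in> F \<Longrightarrow> x + y \<in> F"
  and subfield_diff: "is_subfield F \<Longrightarrow> x \<in> F \<Longrightarrow> y \<in> F \<Longrightarrow> x - y \<in> F"
  and subfield_0: "is_subfield F \<Longrightarrow> 0 \<in> F"
  and subfield_1: "is_subfield F \<Longrightarrow> 1 \<in> F"
  unfolding is_subfield_def by auto

lemma subfield_inverse: "is_subfield F \<Longrightarrow> x \<in> F \<Longrightarrow> inverse x \<in> F"
  unfolding is_subfield_def by (cases "x = 0") auto

lemma subfield_divide: "is_subfield F \<Longrightarrow> x \<in> F \<Longrightarrow> y \<in> F \<Longrightarrow> x / y \<in> F"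
  by (simp add: divide_inverse subfield_mult subfield_inverse)

lemma subfield_uminus: "is_subfield F \<Longrightarrow> x \<in> F \<Longrightarrow> - x \<in> F"
  using subfield_diff[of F 0 x] subfield_0[of F] by simp

lemma subfield_of_nat: "is_subfield F \<Longrightarrow> of_nat n \<in> F"
  by (induction n) (auto intro: subfield_add subfield_0 subfield_1)

lemma subfield_prod: "is_subfield F \<Longrightarrow> (\<And>i. i \<in> I \<Longrightarrow> f i \<in> F) \<Longrightarrow> prod f I \<in> F"
  by (induction I rule: infinite_finite_induct) (auto intro: subfield_mult subfield_1)

lemma subfield_power: "is_subfield F \<Longrightarrow> x \<in> F \<Longrightarrow> x ^ n \<in> F"
  by (induction n) (auto intro: subfield_mult subfield_1)

lemma ftrace_indep:
  fixes b :: "'i \<Rightarrow> 'a::field" and d :: "'j \<Rightarrow> 'a"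
  assumes F: "is_subfield F" and L: "is_subfield L" and FL: "F \<subseteq> L"
    and B: "fbasis F L I b" and D: "fbasis F L J d" and x: "x \<in> L"
  shows "ftrace F J d x = ftrace F I b x"
proof -
  have fI: "finite I" and fJ: "finite J" using B D by (auto simp: fbasis_def)
  have bL: "b i \<in> L" if "i \<in> I" for i using B that by (auto simp: fbasis_def)
  have dL: "d j \<in> L" if "j \<in> J" for j using D that by (auto simp: fbasis_def)
  define P where "P j k = fcoords F I b (d j) k" for j k
  define Q where "Q l m = fcoords F J d (b l) m" for l m
  define A where "A k l = fcoords F I b (x * b k) l" for k l
  have PF: "P j k \<in> F" if "j \<in> J" "k \<in> I" for j k using fcoords(1)[OF B dL[OF that(1)]] that P_def by auto
  have QF: "Q l m \<in> F" if "l \<in> I" "m \<in> J" for l m using fcoords(1)[OF D bL[OF that(1)]] that Q_def by auto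
  have AF: "A k l \<in> F" if "k \<in> I" "l \<in> I" for k l
    using fcoords(1)[OF B subfield_mult[OF L x bL[OF that(1)]]] that A_def by auto
  have dexp: "d j = (\<Sum>k\<in>I. P j k * b k)" if "j \<in> J" for j
    using fcoords(3)[OF B dL[OF that]] P_def by simp
  have bexp: "b l = (\<Sum>m\<in>J. Q l m * d m)" if "l \<in> I" for l
    using fcoords(3)[OF D bL[OF that]] Q_def by simp
  have xbexp: "x * b k = (\<Sum>l\<in>I. A k l * b l)" if "k \<in> I" for k
    using fcoords(3)[OF B subfield_mult[OF L x bL[OF that]]] A_def by simp
  have QP: "(\<Sum>j\<in>J. Q l j * P j k) = (if k = l then 1 else 0)" if "l \<in> I" "k \<in> I" for l k
  proof -
    have "b l = (\<Sum>j\<in>J. Q l j * (\<Sum>k\<in>I. P j k * b k))"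
      using bexp[OF that(1)] dexp by (auto intro!: sum.cong)
    also have "\<dots> = (\<Sum>j\<in>J. \<Sum>k\<in>I. Q l j * P j k * b k)"
      by (simp add: sum_distrib_left mult.assoc)
    also have "\<dots> = (\<Sum>k\<in>I. \<Sum>j\<in>J. Q l j * P j k * b k)"
      by (rule sum.swap)
    also have "\<dots> = (\<Sum>k\<in>I. (\<Sum>j\<in>J. Q l j * P j k) * b k)"
      by (simp add: sum_distrib_right)
    finally have e1: "b l = (\<Sum>k\<in>I. (\<Sum>j\<in>J. Q l j * P j k) * b k)" .
    have "(\<Sum>k\<in>I. (if k = l then 1 else 0) * b k) = (\<Sum>k\<in>I. if k = l then b k else 0)"
      by (rule sum.cong) auto
    then have e2: "b l = (\<Sum>k\<in>I. (if k = l then 1 else 0) * b k)"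
      using that fI by simp
    have "fcoords F I b (b l) k = (\<Sum>j\<in>J. Q l j * P j k)"
      by (rule fcoords_unique_on[OF B bL[OF that(1)] _ e1 that(2)])
         (auto intro!: subfield_sum[OF F] subfield_mult[OF F] QF PF that)
    moreover have "fcoords F I b (b l) k = (if k = l then 1 else 0)"
      by (rule fcoords_unique_on[OF B bL[OF that(1)] _ e2 that(2)])
         (auto intro: subfield_0[OF F] subfield_1[OF F])
    ultimately show ?thesis by simp
  qed
  have xd: "fcoords F J d (x * d j) m = (\<Sum>l\<in>I. \<Sum>k\<in>I. P j k * A k l * Q l m)"
    if "j \<in> J" "m \<in> J" for j m
  proof -
    have "x * d j = (\<Sum>k\<in>I. P j k * (x * b k))"
      using dexp[OF that(1)] by (simp add: sum_distrib_left mult.commute mult.left_commute)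
    also have "\<dots> = (\<Sum>k\<in>I. P j k * (\<Sum>l\<in>I. A k l * (\<Sum>m\<in>J. Q l m * d m)))"
      using xbexp bexp by (auto intro!: sum.cong)
    also have "\<dots> = (\<Sum>k\<in>I. \<Sum>l\<in>I. \<Sum>m\<in>J. P j k * A k l * Q l m * d m)"
      by (simp add: sum_distrib_left mult.assoc)
    also have "\<dots> = (\<Sum>l\<in>I. \<Sum>k\<in>I. \<Sum>m\<in>J. P j k * A k l * Q l m * d m)"
      by (rule sum.swap)
    also have "\<dots> = (\<Sum>l\<in>I. \<Sum>m\<in>J. \<Sum>k\<in>I. P j k * A k l * Q l m * d m)"
      by (rule sum.cong[OF refl], rule sum.swap)
    also have "\<dots> = (\<Sum>m\<in>J. \<Sum>l\<in>I. \<Sum>k\<in>I. P j k * A k l * Q l m * d m)"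
      by (rule sum.swap)
    also have "\<dots> = (\<Sum>m\<in>J. (\<Sum>l\<in>I. \<Sum>k\<in>I. P j k * A k l * Q l m) * d m)"
      by (simp add: sum_distrib_right)
    finally have e: "x * d j = (\<Sum>m\<in>J. (\<Sum>l\<in>I. \<Sum>k\<in>I. P j k * A k l * Q l m) * d m)" .
    show ?thesis
      by (rule fcoords_unique_on[OF D subfield_mult[OF L x dL[OF that(1)]] _ e that(2)])
         (auto intro!: subfield_sum[OF F] subfield_mult[OF F] QF PF AF that)
  qed
  have "ftrace F J d x = (\<Sum>j\<in>J. \<Sum>l\<in>I. \<Sum>k\<in>I. P j k * A k l * Q l j)"
    unfolding ftrace_def using xd by (auto intro!: sum.cong)
  also have "\<dots> = (\<Sum>l\<in>I. \<Sum>j\<in>J. \<Sum>k\<in>I. P j k * A k l * Q l j)"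
    by (rule sum.swap)
  also have "\<dots> = (\<Sum>l\<in>I. \<Sum>k\<in>I. \<Sum>j\<in>J. P j k * A k l * Q l j)"
    by (rule sum.cong[OF refl], rule sum.swap)
  also have "\<dots> = (\<Sum>k\<in>I. \<Sum>l\<in>I. \<Sum>j\<in>J. P j k * A k l * Q l j)"
    by (rule sum.swap)
  also have "\<dots> = (\<Sum>k\<in>I. \<Sum>l\<in>I. A k l * (\<Sum>j\<in>J. Q l j * P j k))"
    by (simp add: sum_distrib_left mult.commute mult.left_commute)
  also have "\<dots> = (\<Sum>k\<in>I. \<Sum>l\<in>I. A k l * (if k = l then 1 else 0))"
    using QP by (auto intro!: sum.cong)
  also have "\<dots> = (\<Sum>k\<in>I. \<Sum>l\<in>I. if l = k then A k l else 0)"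
    by (intro sum.cong) auto
  also have "\<dots> = (\<Sum>k\<in>I. A k k)"
    using fI by simp
  also have "\<dots> = ftrace F I b x" unfolding ftrace_def A_def by simp
  finally show ?thesis .
qed


lemma fbasis_reindex:
  assumes B: "fbasis F L I b" and h: "bij_betw h J I" and fJ: "finite J"
  shows "fbasis F L J (b \<circ> h)"
proof -
  have hJ: "h ` J = I" and inj: "inj_on h J" using h by (auto simp: bij_betw_def)
  have bL: "b ` I \<subseteq> L" using B by (simp add: fbasis_def)
  show ?thesis unfolding fbasis_def
  proof (intro conjI ballI)
    show "finite J" by fact
    show "(b \<circ> h) ` J \<subseteq> L" using bL hJ by auto
    fix v assume v: "v \<in> L"
    let ?c = "fcoords F I b v"
    define c' where "c' j = (if j \<in> J then ?c (h j) else 0)" for j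
    have ex: "(\<forall>i\<in>J. c' i \<in> F) \<and> (\<forall>i. i \<notin> J \<longrightarrow> c' i = 0) \<and> v = (\<Sum>i\<in>J. c' i * (b \<circ> h) i)"
    proof (intro conjI allI impI ballI)
      show "c' i \<in> F" if "i \<in> J" for i using fcoords(1)[OF B v] that hJ c'_def by auto
      show "c' i = 0" if "i \<notin> J" for i using that c'_def by auto
      have "v = (\<Sum>i\<in>I. ?c i * b i)" by (rule fcoords(3)[OF B v])
      also have "\<dots> = (\<Sum>j\<in>J. ?c (h j) * b (h j))"
        using sum.reindex[OF inj, of "\<lambda>i. ?c i * b i"] hJ by simp
      also have "\<dots> = (\<Sum>i\<in>J. c' i * (b \<circ> h) i)" by (auto simp: c'_def intro!: sum.cong)
      finally show "v = (\<Sum>i\<in>J. c' i * (b \<circ> h) i)" .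
    qed
    show "\<exists>!c. (\<forall>i\<in>J. c i \<in> F) \<and> (\<forall>i. i \<notin> J \<longrightarrow> c i = 0) \<and> v = (\<Sum>i\<in>J. c i * (b \<circ> h) i)"
    proof (rule ex1I[of _ c'])
      show "(\<forall>i\<in>J. c' i \<in> F) \<and> (\<forall>i. i \<notin> J \<longrightarrow> c' i = 0) \<and> v = (\<Sum>i\<in>J. c' i * (b \<circ> h) i)"
        by (rule ex)
      fix e assume e: "(\<forall>i\<in>J. e i \<in> F) \<and> (\<forall>i. i \<notin> J \<longrightarrow> e i = 0) \<and> v = (\<Sum>i\<in>J. e i * (b \<circ> h) i)"
      define g where "g i = (if i \<in> I then e (the_inv_into J h i) else 0)" for i
      have hinv: "the_inv_into J h (h j) = j" if "j \<in> J" for j using the_inv_into_f_f[OF inj that] .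
      have "v = (\<Sum>j\<in>J. g (h j) * b (h j))" using e hinv hJ by (auto simp: g_def intro!: sum.cong)
      also have "\<dots> = (\<Sum>i\<in>I. g i * b i)"
        using sum.reindex[OF inj, of "\<lambda>i. g i * b i"] hJ by simp
      finally have "fcoords F I b v = g"
        by (intro fcoords_unique[OF B v]) (use e hJ the_inv_into_into[OF inj] in \<open>auto simp: g_def\<close>)
      then show "e = c'" using e hinv hJ by (auto simp: c'_def g_def fun_eq_iff)
    qed
  qed
qed

lemma ftrace_one:
  assumes F: "is_subfield F" and B: "fbasis F L I b" and L: "is_subfield L" "F \<subseteq> L"
  shows "ftrace F I b 1 = of_nat (card I)"
proof -
  have fI: "finite I" and bL: "\<And>i. i \<in> I \<Longrightarrow> b i \<in> L" using B by (auto simp: fbasis_def)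
  have "fcoords F I b (b i) i = 1" if i: "i \<in> I" for i
  proof -
    have "(\<Sum>k\<in>I. (if k = i then 1 else 0) * b k) = (\<Sum>k\<in>I. if k = i then b k else 0)"
      by (rule sum.cong) auto
    then have e: "b i = (\<Sum>k\<in>I. (if k = i then 1 else 0) * b k)" using i fI by simp
    show ?thesis using fcoords_unique_on[OF B bL[OF i] _ e i] subfield_0[OF F] subfield_1[OF F] by auto
  qed
  then show ?thesis unfolding ftrace_def by simp
qed

lemma fbasis_card:
  assumes F: "is_subfield F" and L: "is_subfield L" "F \<subseteq> L"
    and B: "fbasis F L I (b :: 'i \<Rightarrow> 'a::field_char_0)" and D: "fbasis F L J (d :: 'j \<Rightarrow> 'a)"
  shows "card I = card J"
proof -
  have "ftrace F J d 1 = ftrace F I b 1"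
    by (rule ftrace_indep[OF F L(1) L(2) B D subfield_1[OF L(1)]])
  then have "(of_nat (card J) :: 'a) = of_nat (card I)"
    using ftrace_one[OF F B L] ftrace_one[OF F D L] by simp
  then show ?thesis by simp
qed

lemma fbasis_cong:
  assumes "\<And>i. i \<in> I \<Longrightarrow> b i = b' i"
  shows "fbasis F L I b = fbasis F L I b'"
proof -
  have "b ` I = b' ` I" using assms by auto
  moreover have "(\<Sum>i\<in>I. c i * b i) = (\<Sum>i\<in>I. c i * b' i)" for c
    using assms by (auto intro!: sum.cong)
  ultimately show ?thesis unfolding fbasis_def by simp
qed

lemma fbasis_to_list:
  assumes B: "fbasis F L I b"
  shows "\<exists>bs. is_basis F L bs \<and> length bs = card I"
proof -
  have fI: "finite I" using B by (simp add: fbasis_def)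
  obtain xs where xs: "set xs = I" "distinct xs" using finite_distinct_list[OF fI] by blast
  have h: "bij_betw (\<lambda>i. xs ! i) {..<length xs} I" using bij_betw_nth[OF xs(2) refl xs(1)[symmetric]] .
  have "fbasis F L {..<length xs} (b \<circ> (\<lambda>i. xs ! i))" by (rule fbasis_reindex[OF B h]) simp
  then have "is_basis F L (map b xs)" unfolding is_basis_fbasis
    by (subst fbasis_cong[where b'="b \<circ> (\<lambda>i. xs ! i)"]) auto
  moreover have "length (map b xs) = card I" using xs distinct_card by fastforce
  ultimately show ?thesis by blast
qed

lemma field_degree_trace:
  assumes F: "is_subfield F" and L: "is_subfield L" "F \<subseteq> L"
    and B: "fbasis F L I (b :: 'i \<Rightarrow> 'a::field_char_0)"
  shows "field_degree F L = card I" "\<And>x. x \<in> L \<Longrightarrow> field_trace F L x = ftrace F I b x"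
proof -
  obtain bs where bs: "is_basis F L bs" using fbasis_to_list[OF B] by blast
  then have sb: "is_basis F L (some_basis F L)" unfolding some_basis_def by (rule someI)
  then have SB: "fbasis F L {..<length (some_basis F L)} (\<lambda>i. some_basis F L ! i)"
    by (simp add: is_basis_fbasis)
  show "field_degree F L = card I" unfolding field_degree_def
    using fbasis_card[OF F L SB B] by simp
  fix x assume x: "x \<in> L"
  have "field_trace F L x = ftrace F {..<length (some_basis F L)} (\<lambda>i. some_basis F L ! i) x"
    unfolding field_trace_def ftrace_def Let_def coords_fcoords by simp
  also have "\<dots> = ftrace F I b x" by (rule ftrace_indep[OF F L(1) L(2) B SB x])
  finally show "field_trace F L x = ftrace F I b x" .
qed


lemma fcoords_zero:
  assumes B: "fbasis F L I b" and F: "is_subfield F" and L: "0 \<in> L"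
  shows "fcoords F I b 0 = (\<lambda>i. 0)"
  by (rule fcoords_unique[OF B L]) (auto simp: subfield_0[OF F])

lemma fbasis_tower:
  assumes F: "is_subfield F" and M: "is_subfield M" and L: "is_subfield L"
    and FM: "F \<subseteq> M" and hML: "M \<subseteq> L"
    and B: "fbasis F M I b" and C: "fbasis M L J c"
  shows "fbasis F L (I \<times> J) (\<lambda>(i, j). b i * c j)"
proof -
  have fI: "finite I" and fJ: "finite J" and bM: "\<And>i. i \<in> I \<Longrightarrow> b i \<in> M"
    and cL: "\<And>j. j \<in> J \<Longrightarrow> c j \<in> L" using B C by (auto simp: fbasis_def)
  show ?thesis unfolding fbasis_def
  proof (intro conjI ballI)
    show "finite (I \<times> J)" using fI fJ by simp
    show "(\<lambda>(i, j). b i * c j) ` (I \<times> J) \<subseteq> L"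
      using bM cL hML by (auto intro!: subfield_mult[OF L])
    fix v assume v: "v \<in> L"
    define \<gamma> where "\<gamma> = fcoords M J c v"
    have \<gamma>M: "\<gamma> j \<in> M" if "j \<in> J" for j using fcoords(1)[OF C v] that \<gamma>_def by auto
    define \<beta> where "\<beta> p = (if p \<in> I \<times> J then fcoords F I b (\<gamma> (snd p)) (fst p) else 0)" for p
    have \<beta>F: "\<beta> p \<in> F" if "p \<in> I \<times> J" for p
      using fcoords(1)[OF B \<gamma>M] that \<beta>_def by auto
    have gexp: "\<gamma> j = (\<Sum>i\<in>I. \<beta> (i, j) * b i)" if "j \<in> J" for j
      using fcoords(3)[OF B \<gamma>M[OF that]] that by (auto simp: \<beta>_def intro!: sum.cong)
    have vexp: "v = (\<Sum>p\<in>I \<times> J. \<beta> p * (case p of (i, j) \<Rightarrow> b i * c j))"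
    proof -
      have "v = (\<Sum>j\<in>J. \<gamma> j * c j)" using fcoords(3)[OF C v] \<gamma>_def by simp
      also have "\<dots> = (\<Sum>j\<in>J. \<Sum>i\<in>I. \<beta> (i, j) * (b i * c j))"
        using gexp by (simp add: sum_distrib_right mult.assoc)
      also have "\<dots> = (\<Sum>i\<in>I. \<Sum>j\<in>J. \<beta> (i, j) * (b i * c j))" by (rule sum.swap)
      also have "\<dots> = (\<Sum>p\<in>I \<times> J. \<beta> p * (case p of (i, j) \<Rightarrow> b i * c j))"
        unfolding sum.cartesian_product by (intro sum.cong) auto
      finally show ?thesis .
    qed
    show "\<exists>!e. (\<forall>p\<in>I \<times> J. e p \<in> F) \<and> (\<forall>p. p \<notin> I \<times> J \<longrightarrow> e p = 0) \<and>
              v = (\<Sum>p\<in>I \<times> J. e p * (case p of (i, j) \<Rightarrow> b i * c j))"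
    proof (rule ex1I[of _ \<beta>])
      show "(\<forall>p\<in>I \<times> J. \<beta> p \<in> F) \<and> (\<forall>p. p \<notin> I \<times> J \<longrightarrow> \<beta> p = 0) \<and>
              v = (\<Sum>p\<in>I \<times> J. \<beta> p * (case p of (i, j) \<Rightarrow> b i * c j))"
        using \<beta>F vexp by (auto simp: \<beta>_def)
      fix e assume e: "(\<forall>p\<in>I \<times> J. e p \<in> F) \<and> (\<forall>p. p \<notin> I \<times> J \<longrightarrow> e p = 0) \<and>
              v = (\<Sum>p\<in>I \<times> J. e p * (case p of (i, j) \<Rightarrow> b i * c j))"
      define \<delta> where "\<delta> j = (\<Sum>i\<in>I. e (i, j) * b i)" for j
      have \<delta>M: "\<delta> j \<in> M" if "j \<in> J" for j
        unfolding \<delta>_def using e that bM FM by (auto intro!: subfield_sum[OF M] subfield_mult[OF M])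
      have "v = (\<Sum>i\<in>I. \<Sum>j\<in>J. e (i, j) * (b i * c j))"
        using e unfolding sum.cartesian_product by (auto intro!: sum.cong)
      also have "\<dots> = (\<Sum>j\<in>J. \<Sum>i\<in>I. e (i, j) * (b i * c j))" by (rule sum.swap)
      also have "\<dots> = (\<Sum>j\<in>J. \<delta> j * c j)"
        by (simp add: \<delta>_def sum_distrib_right mult.assoc)
      finally have ve: "v = (\<Sum>j\<in>J. \<delta> j * c j)" .
      have dg: "\<delta> j = \<gamma> j" if "j \<in> J" for j
        unfolding \<gamma>_def using fcoords_unique_on[OF C v _ ve that] \<delta>M by simp
      show "e = \<beta>"
      proof
        fix p show "e p = \<beta> p"
        proof (cases "p \<in> I \<times> J")
          case True
          then obtain i j where p: "p = (i, j)" "i \<in> I" "j \<in> J" by auto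
          have "fcoords F I b (\<gamma> j) i = e (i, j)"
            using fcoords_unique_on[OF B \<gamma>M[OF p(3)] _ _ p(2), of "\<lambda>i. e (i, j)"] e p dg[OF p(3)]
            by (auto simp: \<delta>_def)
          then show ?thesis using p by (simp add: \<beta>_def)
        next
          case False then show ?thesis using e by (cases p) (auto simp: \<beta>_def)
        qed
      qed
    qed
  qed
qed

lemma ftrace_tower:
  assumes F: "is_subfield F" and M: "is_subfield M" and L: "is_subfield L"
    and FM: "F \<subseteq> M" and hML: "M \<subseteq> L"
    and B: "fbasis F M I b" and C: "fbasis M L J c" and x: "x \<in> M"
  shows "ftrace F (I \<times> J) (\<lambda>(i, j). b i * c j) x = of_nat (card J) * ftrace F I b x"
proof -
  have BC: "fbasis F L (I \<times> J) (\<lambda>(i, j). b i * c j)" by (rule fbasis_tower[OF assms(1-7)])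
  have fI: "finite I" and fJ: "finite J" and bM: "\<And>i. i \<in> I \<Longrightarrow> b i \<in> M"
    and cL: "\<And>j. j \<in> J \<Longrightarrow> c j \<in> L" using B C by (auto simp: fbasis_def)
  define A where "A i k = fcoords F I b (x * b i) k" for i k
  have AF: "A i k \<in> F" if "i \<in> I" "k \<in> I" for i k
    using fcoords(1)[OF B subfield_mult[OF M x bM[OF that(1)]]] that A_def by auto
  have xb: "x * b i = (\<Sum>k\<in>I. A i k * b k)" if "i \<in> I" for i
    using fcoords(3)[OF B subfield_mult[OF M x bM[OF that]]] A_def by simp
  have diag: "fcoords F (I \<times> J) (\<lambda>(i, j). b i * c j) (x * (b i * c j)) (i, j) = A i i"
    if i: "i \<in> I" and j: "j \<in> J" for i j
  proof -
    define e where "e p = (if snd p = j then A i (fst p) else 0)" for p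
    have "x * (b i * c j) = (\<Sum>k\<in>I. A i k * b k) * c j" using xb[OF i] by (simp add: mult.assoc)
    also have "\<dots> = (\<Sum>k\<in>I. \<Sum>l\<in>J. if l = j then A i k * (b k * c l) else 0)"
      using j fJ by (simp add: sum_distrib_right mult.assoc)
    also have "\<dots> = (\<Sum>k\<in>I. \<Sum>l\<in>J. e (k, l) * (b k * c l))"
      by (intro sum.cong) (auto simp: e_def)
    also have "\<dots> = (\<Sum>p\<in>I \<times> J. e p * (case p of (k, l) \<Rightarrow> b k * c l))"
      unfolding sum.cartesian_product by (intro sum.cong) auto
    finally have ex: "x * (b i * c j) = (\<Sum>p\<in>I \<times> J. e p * (case p of (k, l) \<Rightarrow> b k * c l))" .
    have mem: "x * (b i * c j) \<in> L"
      using x i j bM cL hML by (auto intro!: subfield_mult[OF L])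
    have "fcoords F (I \<times> J) (\<lambda>(i, j). b i * c j) (x * (b i * c j)) (i, j) = e (i, j)"
      by (rule fcoords_unique_on[OF BC mem _ ex]) (use i j AF subfield_0[OF F] in \<open>auto simp: e_def\<close>)
    then show ?thesis by (simp add: e_def)
  qed
  have "(\<Sum>i\<in>I. \<Sum>j\<in>J. A i i) =
     (\<Sum>i\<in>I. \<Sum>j\<in>J. fcoords F (I \<times> J) (\<lambda>(i, j). b i * c j) (x * (b i * c j)) (i, j))"
    using diag by auto
  also have "\<dots> = ftrace F (I \<times> J) (\<lambda>(i, j). b i * c j) x"
    unfolding ftrace_def sum.cartesian_product by (intro sum.cong) auto
  finally have "ftrace F (I \<times> J) (\<lambda>(i, j). b i * c j) x = (\<Sum>i\<in>I. \<Sum>j\<in>J. A i i)" ..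
  also have "\<dots> = of_nat (card J) * ftrace F I b x"
    by (simp add: ftrace_def A_def sum_distrib_left mult.commute)
  finally show ?thesis .
qed

lemma extract_basis:
  assumes F: "is_subfield F" and fI: "finite I" and bL: "b ` I \<subseteq> L"
    and span: "\<forall>v\<in>L. \<exists>c. (\<forall>i\<in>I. c i \<in> F) \<and> v = (\<Sum>i\<in>I. c i * b i)"
  shows "\<exists>T\<subseteq>I. fbasis F L T b"
  using fI span bL
proof (induction "card I" arbitrary: I rule: less_induct)
  case less
  show ?case
  proof (cases "\<forall>a. (\<forall>i\<in>I. a i \<in> F) \<and> (\<Sum>i\<in>I. a i * b i) = 0 \<longrightarrow> (\<forall>i\<in>I. a i = 0)")
    case indep: True
    have "fbasis F L I b" unfolding fbasis_def
    proof (intro conjI ballI)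
      show "finite I" "b ` I \<subseteq> L" using less by auto
      fix v assume v: "v \<in> L"
      obtain c where c: "\<forall>i\<in>I. c i \<in> F" "v = (\<Sum>i\<in>I. c i * b i)" using less.prems(2) v by blast
      define c' where "c' i = (if i \<in> I then c i else 0)" for i
      have c'v: "v = (\<Sum>i\<in>I. c' i * b i)" using c by (simp add: c'_def)
      show "\<exists>!c. (\<forall>i\<in>I. c i \<in> F) \<and> (\<forall>i. i \<notin> I \<longrightarrow> c i = 0) \<and> v = (\<Sum>i\<in>I. c i * b i)"
      proof (rule ex1I[of _ c'])
        show "(\<forall>i\<in>I. c' i \<in> F) \<and> (\<forall>i. i \<notin> I \<longrightarrow> c' i = 0) \<and> v = (\<Sum>i\<in>I. c' i * b i)"
          using c c'v by (auto simp: c'_def)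
        fix e assume e: "(\<forall>i\<in>I. e i \<in> F) \<and> (\<forall>i. i \<notin> I \<longrightarrow> e i = 0) \<and> v = (\<Sum>i\<in>I. e i * b i)"
        have "(\<Sum>i\<in>I. (e i - c' i) * b i) = 0"
          using e c'v by (simp add: algebra_simps sum_subtractf)
        moreover have "\<forall>i\<in>I. e i - c' i \<in> F" using e c by (auto simp: c'_def intro: subfield_diff[OF F])
        ultimately have "\<forall>i\<in>I. e i - c' i = 0" using indep[rule_format, of "\<lambda>i. e i - c' i"] by blast
        then show "e = c'" using e by (auto simp: c'_def fun_eq_iff)
      qed
    qed
    then show ?thesis by blast
  next
    case False
    then obtain a i0 where a: "\<forall>i\<in>I. a i \<in> F" "(\<Sum>i\<in>I. a i * b i) = 0" "i0 \<in> I" "a i0 \<noteq> 0"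
      by blast
    let ?I = "I - {i0}"
    have b0: "b i0 = (\<Sum>i\<in>?I. (- a i / a i0) * b i)"
    proof -
      have "0 = a i0 * b i0 + (\<Sum>i\<in>?I. a i * b i)"
        using a(2) sum.remove[OF less.prems(1) a(3), of "\<lambda>i. a i * b i"] by simp
      then have "a i0 * b i0 = - (\<Sum>i\<in>?I. a i * b i)" by (simp add: eq_neg_iff_add_eq_0 add.commute)
      then have "b i0 = - (\<Sum>i\<in>?I. a i * b i) / a i0" using a(4) by (simp add: field_simps)
      then show ?thesis by (simp add: sum_divide_distrib sum_negf[symmetric] field_simps)
    qed
    have span': "\<forall>v\<in>L. \<exists>c. (\<forall>i\<in>?I. c i \<in> F) \<and> v = (\<Sum>i\<in>?I. c i * b i)"
    proof
      fix v assume v: "v \<in> L"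
      obtain c where c: "\<forall>i\<in>I. c i \<in> F" "v = (\<Sum>i\<in>I. c i * b i)" using less.prems(2) v by blast
      have "v = c i0 * b i0 + (\<Sum>i\<in>?I. c i * b i)"
        using c(2) sum.remove[OF less.prems(1) a(3), of "\<lambda>i. c i * b i"] by simp
      also have "\<dots> = (\<Sum>i\<in>?I. (c i + c i0 * (- a i / a i0)) * b i)"
      proof -
        have "(\<Sum>i\<in>?I. (c i + c i0 * (- a i / a i0)) * b i) =
              (\<Sum>i\<in>?I. c i * b i) + c i0 * (\<Sum>i\<in>?I. (- a i / a i0) * b i)"
          by (simp only: sum.distrib[symmetric] distrib_right sum_distrib_left mult.assoc)
        then show ?thesis using b0 by (simp add: add.commute)
      qed
      finally have "v = (\<Sum>i\<in>?I. (c i + c i0 * (- a i / a i0)) * b i)" .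
      moreover have "\<forall>i\<in>?I. c i + c i0 * (- a i / a i0) \<in> F"
      proof
        fix i assume "i \<in> ?I"
        then have "c i \<in> F" "a i \<in> F" "c i0 \<in> F" "a i0 \<in> F" using c a by auto
        then show "c i + c i0 * (- a i / a i0) \<in> F"
          by (intro subfield_add[OF F] subfield_mult[OF F] subfield_divide[OF F] subfield_uminus[OF F])
      qed
      ultimately show "\<exists>c. (\<forall>i\<in>?I. c i \<in> F) \<and> v = (\<Sum>i\<in>?I. c i * b i)"
        by (intro exI[of _ "\<lambda>i. c i + c i0 * (- a i / a i0)"]) simp
    qed
    have "card ?I < card I" using less.prems(1) a(3) by (meson card_Diff1_less)
    moreover have "finite ?I" using less.prems(1) by simp
    moreover have "b ` ?I \<subseteq> L" using less.prems(3) by blast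
    ultimately obtain T where "T \<subseteq> ?I" "fbasis F L T b"
      using less.hyps[of ?I] span' by blast
    then show ?thesis by blast
  qed
qed


lemma ftrace_mult:
  assumes F: "is_subfield F" and L: "is_subfield L" and FL: "F \<subseteq> L"
    and B: "fbasis F L I b" and a: "a \<in> F" and x: "x \<in> L"
  shows "ftrace F I b (a * x) = a * ftrace F I b x"
proof -
  have bL: "\<And>i. i \<in> I \<Longrightarrow> b i \<in> L" using B by (auto simp: fbasis_def)
  have aL: "a \<in> L" using a FL by auto
  have "fcoords F I b (a * x * b i) i = a * fcoords F I b (x * b i) i" if i: "i \<in> I" for i
  proof -
    have xb: "x * b i \<in> L" using subfield_mult[OF L x bL[OF i]] .
    have "a * x * b i = a * (\<Sum>k\<in>I. fcoords F I b (x * b i) k * b k)"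
      using fcoords(3)[OF B xb] by (simp add: mult.assoc)
    also have "\<dots> = (\<Sum>k\<in>I. (a * fcoords F I b (x * b i) k) * b k)"
      by (simp add: sum_distrib_left mult.assoc)
    finally have e: "a * x * b i = (\<Sum>k\<in>I. (a * fcoords F I b (x * b i) k) * b k)" .
    show ?thesis
      by (rule fcoords_unique_on[OF B _ _ e i])
        (use subfield_mult[OF L aL xb] fcoords(1)[OF B xb] a in \<open>auto simp: mult.assoc intro: subfield_mult[OF F]\<close>)
  qed
  then show ?thesis unfolding ftrace_def by (simp add: sum_distrib_left)
qed

lemma ftrace_add:
  assumes F: "is_subfield F" and L: "is_subfield L" and FL: "F \<subseteq> L"
    and B: "fbasis F L I b" and x: "x \<in> L" and y: "y \<in> L"
  shows "ftrace F I b (x + y) = ftrace F I b x + ftrace F I b y"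
proof -
  have bL: "\<And>i. i \<in> I \<Longrightarrow> b i \<in> L" using B by (auto simp: fbasis_def)
  have "fcoords F I b ((x + y) * b i) i = fcoords F I b (x * b i) i + fcoords F I b (y * b i) i"
    if i: "i \<in> I" for i
  proof -
    have xb: "x * b i \<in> L" using subfield_mult[OF L x bL[OF i]] .
    have yb: "y * b i \<in> L" using subfield_mult[OF L y bL[OF i]] .
    have "(x + y) * b i = (\<Sum>k\<in>I. fcoords F I b (x * b i) k * b k) + (\<Sum>k\<in>I. fcoords F I b (y * b i) k * b k)"
      using fcoords(3)[OF B xb] fcoords(3)[OF B yb] by (simp add: distrib_right)
    also have "\<dots> = (\<Sum>k\<in>I. (fcoords F I b (x * b i) k + fcoords F I b (y * b i) k) * b k)"
      by (simp add: sum.distrib distrib_right)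
    finally have e: "(x + y) * b i = (\<Sum>k\<in>I. (fcoords F I b (x * b i) k + fcoords F I b (y * b i) k) * b k)" .
    show ?thesis
      by (rule fcoords_unique_on[OF B _ _ e i])
        (use subfield_mult[OF L subfield_add[OF L x y] bL[OF i]] fcoords(1)[OF B xb] fcoords(1)[OF B yb]
          in \<open>auto intro: subfield_add[OF F]\<close>)
  qed
  then show ?thesis unfolding ftrace_def by (simp add: sum.distrib)
qed

lemma ftrace_mem:
  assumes F: "is_subfield F" and L: "is_subfield L" and B: "fbasis F L I b" and x: "x \<in> L"
  shows "ftrace F I b x \<in> F"
proof -
  have bL: "\<And>i. i \<in> I \<Longrightarrow> b i \<in> L" using B by (auto simp: fbasis_def)
  show ?thesis unfolding ftrace_def
    using fcoords(1)[OF B subfield_mult[OF L x bL]] by (auto intro!: subfield_sum[OF F])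
qed

lemma fbasis_self:
  assumes F: "is_subfield F"
  shows "fbasis F F {0::nat} (\<lambda>_. 1)"
  unfolding fbasis_def
proof (intro conjI ballI)
  show "finite {0::nat}" by simp
  show "(\<lambda>_. 1) ` {0::nat} \<subseteq> F" using subfield_1[OF F] by auto
  fix v assume v: "v \<in> F"
  show "\<exists>!c. (\<forall>i\<in>{0::nat}. c i \<in> F) \<and> (\<forall>i. i \<notin> {0} \<longrightarrow> c i = 0) \<and> v = (\<Sum>i\<in>{0}. c i * 1)"
    by (rule ex1I[of _ "\<lambda>i. if i = 0 then v else 0"]) (use v in \<open>auto simp: fun_eq_iff\<close>)
qed

lemma ftrace_self:
  assumes F: "is_subfield F" and x: "x \<in> F"
  shows "ftrace F {0::nat} (\<lambda>_. 1) x = x"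
proof -
  have "fcoords F {0::nat} (\<lambda>_. 1) (x * 1) 0 = x"
    by (rule fcoords_unique_on[OF fbasis_self[OF F], of _ "\<lambda>_. x"]) (use x in auto)
  then show ?thesis unfolding ftrace_def by simp
qed

locale tower =
  fixes Kt :: "nat \<Rightarrow> 'a::field_char_0 set"
  assumes mono: "\<And>n. Kt n \<subseteq> Kt (Suc n)"
    and fin: "\<And>n. finite_ext (Kt 0) (Kt n)"
begin

lemma sub: "is_subfield (Kt n)" using fin[of n] by (simp add: finite_ext_def)

lemma le_mono: "n \<le> \<nu> \<Longrightarrow> Kt n \<subseteq> Kt \<nu>"
  using lift_Suc_mono_le[of Kt, OF mono] by blast

lemma K0_sub: "Kt 0 \<subseteq> Kt n" using le_mono by simp

lemma basis_exists:
  assumes "n \<le> \<nu>"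
  shows "\<exists>I (b :: nat \<Rightarrow> 'a). fbasis (Kt n) (Kt \<nu>) I b"
proof -
  obtain bs where bs: "is_basis (Kt 0) (Kt \<nu>) bs" using fin[of \<nu>] by (auto simp: finite_ext_def)
  then have B0: "fbasis (Kt 0) (Kt \<nu>) {..<length bs} (\<lambda>i. bs ! i)" by (simp add: is_basis_fbasis)
  have "\<forall>v\<in>Kt \<nu>. \<exists>c. (\<forall>i\<in>{..<length bs}. c i \<in> Kt n) \<and> v = (\<Sum>i\<in>{..<length bs}. c i * bs ! i)"
    using fcoords(1,3)[OF B0] K0_sub by blast
  moreover have "(\<lambda>i. bs ! i) ` {..<length bs} \<subseteq> Kt \<nu>" using B0 by (simp add: fbasis_def)
  ultimately obtain T where "fbasis (Kt n) (Kt \<nu>) T (\<lambda>i. bs ! i)"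
    using extract_basis[OF sub, of "{..<length bs}" "\<lambda>i. bs ! i" "Kt \<nu>"] by blast
  then show ?thesis by blast
qed

definition deg where "deg n \<nu> = field_degree (Kt n) (Kt \<nu>)"
definition tr where "tr n \<nu> x = field_trace (Kt n) (Kt \<nu>) x"

lemma tr_basis:
  assumes "n \<le> \<nu>" "fbasis (Kt n) (Kt \<nu>) I b" 
  shows "deg n \<nu> = card I" "\<And>x. x \<in> Kt \<nu> \<Longrightarrow> tr n \<nu> x = ftrace (Kt n) I b x"
  using field_degree_trace[OF sub sub le_mono[OF assms(1)] assms(2)] unfolding deg_def tr_def by auto

lemma deg_pos:
  assumes "n \<le> \<nu>" shows "deg n \<nu> > 0"
proof -
  obtain I and b :: "nat \<Rightarrow> 'a" where B: "fbasis (Kt n) (Kt \<nu>) I b" using basis_exists[OF assms] by blast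
  have "(1::'a) = (\<Sum>i\<in>I. fcoords (Kt n) I b 1 i * b i)" using fcoords(3)[OF B subfield_1[OF sub]] .
  then have "I \<noteq> {}" by auto
  moreover have "finite I" using B by (simp add: fbasis_def)
  ultimately show ?thesis using tr_basis(1)[OF assms B] by (simp add: card_gt_0_iff)
qed

lemma deg_mult:
  assumes "n \<le> \<mu>" "\<mu> \<le> \<nu>"
  shows "deg n \<nu> = deg n \<mu> * deg \<mu> \<nu>"
    and "\<And>x. x \<in> Kt \<mu> \<Longrightarrow> tr n \<nu> x = of_nat (deg \<mu> \<nu>) * tr n \<mu> x"
proof -
  obtain I and b :: "nat \<Rightarrow> 'a" where B: "fbasis (Kt n) (Kt \<mu>) I b" using basis_exists[OF assms(1)] by blast
  obtain J and c :: "nat \<Rightarrow> 'a" where C: "fbasis (Kt \<mu>) (Kt \<nu>) J c" using basis_exists[OF assms(2)] by blast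
  have BC: "fbasis (Kt n) (Kt \<nu>) (I \<times> J) (\<lambda>(i, j). b i * c j)"
    by (rule fbasis_tower[OF sub sub sub le_mono[OF assms(1)] le_mono[OF assms(2)] B C])
  have nn: "n \<le> \<nu>" using assms by simp
  show "deg n \<nu> = deg n \<mu> * deg \<mu> \<nu>"
    using tr_basis(1)[OF nn BC] tr_basis(1)[OF assms(1) B] tr_basis(1)[OF assms(2) C] by (simp add: card_cartesian_product)
  fix x assume x: "x \<in> Kt \<mu>"
  have xn: "x \<in> Kt \<nu>" using x le_mono[OF assms(2)] by auto
  show "tr n \<nu> x = of_nat (deg \<mu> \<nu>) * tr n \<mu> x"
    using tr_basis(2)[OF nn BC xn] tr_basis(2)[OF assms(1) B x] tr_basis(1)[OF assms(2) C]
      ftrace_tower[OF sub sub sub le_mono[OF assms(1)] le_mono[OF assms(2)] B C x] by simp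
qed

lemma tr_lin:
  assumes "n \<le> \<nu>" "x \<in> Kt \<nu>" "y \<in> Kt \<nu>" "a \<in> Kt n"
  shows "tr n \<nu> (a * x) = a * tr n \<nu> x" "tr n \<nu> (x + y) = tr n \<nu> x + tr n \<nu> y"
    "tr n \<nu> x \<in> Kt n"
proof -
  obtain I and b :: "nat \<Rightarrow> 'a" where B: "fbasis (Kt n) (Kt \<nu>) I b" using basis_exists[OF assms(1)] by blast
  have ax: "a * x \<in> Kt \<nu>" using assms le_mono[OF assms(1)] by (auto intro: subfield_mult[OF sub])
  show "tr n \<nu> (a * x) = a * tr n \<nu> x"
    using tr_basis(2)[OF assms(1) B ax] tr_basis(2)[OF assms(1) B assms(2)]
      ftrace_mult[OF sub sub le_mono[OF assms(1)] B assms(4,2)] by simp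
  show "tr n \<nu> (x + y) = tr n \<nu> x + tr n \<nu> y"
    using tr_basis(2)[OF assms(1) B subfield_add[OF sub assms(2,3)]] tr_basis(2)[OF assms(1) B assms(2)]
      tr_basis(2)[OF assms(1) B assms(3)] ftrace_add[OF sub sub le_mono[OF assms(1)] B assms(2,3)] by simp
  show "tr n \<nu> x \<in> Kt n"
    using tr_basis(2)[OF assms(1) B assms(2)] ftrace_mem[OF sub sub B assms(2)] by simp
qed

lemma tr_self: "x \<in> Kt n \<Longrightarrow> tr n n x = x" and deg_self: "deg n n = 1"
  using tr_basis[OF order.refl fbasis_self[OF sub]] ftrace_self[OF sub] by auto

lemma tr_one: "n \<le> \<nu> \<Longrightarrow> tr n \<nu> 1 = of_nat (deg n \<nu>)"
  using deg_mult(2)[of n n \<nu> 1] tr_self[of 1 n] subfield_1[OF sub] by simp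

lemma Tnu_def': "Tnu Kt n \<nu> x = of_nat (deg 0 n) / of_nat (deg 0 \<nu>) * tr n \<nu> x"
  unfolding Tnu_def deg_def tr_def by simp

lemma Tnu_indep:
  assumes "n \<le> \<mu>" "\<mu> \<le> \<nu>" "x \<in> Kt \<mu>"
  shows "Tnu Kt n \<nu> x = Tnu Kt n \<mu> x"
proof -
  have "deg 0 \<nu> = deg 0 \<mu> * deg \<mu> \<nu>" using deg_mult(1)[of 0 \<mu> \<nu>] assms by simp
  moreover have "deg \<mu> \<nu> > 0" using deg_pos assms by simp
  ultimately show ?thesis unfolding Tnu_def' using deg_mult(2)[OF assms] by simp
qed

lemma Tnu_self: "x \<in> Kt n \<Longrightarrow> Tnu Kt n n x = x"
  unfolding Tnu_def' using deg_pos[of 0 n] tr_self by simp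

lemma Tnu_lin:
  assumes "n \<le> \<nu>" "x \<in> Kt \<nu>" "y \<in> Kt \<nu>" "a \<in> Kt n"
  shows "Tnu Kt n \<nu> (a * x) = a * Tnu Kt n \<nu> x" "Tnu Kt n \<nu> (x + y) = Tnu Kt n \<nu> x + Tnu Kt n \<nu> y"
    "Tnu Kt n \<nu> x \<in> Kt n"
  unfolding Tnu_def' using tr_lin[OF assms]
  by (auto simp: algebra_simps add_divide_distrib intro!: subfield_mult[OF sub] subfield_divide[OF sub] subfield_of_nat[OF sub])

lemma Tnu_diff:
  assumes "n \<le> \<nu>" "x \<in> Kt \<nu>" "y \<in> Kt \<nu>"
  shows "Tnu Kt n \<nu> (x - y) = Tnu Kt n \<nu> x - Tnu Kt n \<nu> y"
  using Tnu_lin(2)[OF assms(1) subfield_diff[OF sub assms(2,3)] assms(3) subfield_1[OF sub]] by simp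

lemma Tnu_one:
  assumes "n \<le> \<nu>" shows "Tnu Kt n \<nu> 1 = 1"
proof -
  have "deg 0 \<nu> = deg 0 n * deg n \<nu>" using deg_mult(1)[of 0 n \<nu>] assms by simp
  moreover have "deg 0 n > 0" "deg n \<nu> > 0" using deg_pos assms by auto
  ultimately show ?thesis unfolding Tnu_def' using tr_one[OF assms] by simp
qed

lemma Tn_eq:
  assumes "n \<le> \<nu>" "x \<in> Kt \<nu>"
  shows "Tn Kt n x = Tnu Kt n \<nu> x"
proof -
  let ?m = "LEAST \<mu>. n \<le> \<mu> \<and> x \<in> Kt \<mu>"
  have m: "n \<le> ?m \<and> x \<in> Kt ?m" using LeastI[of "\<lambda>\<mu>. n \<le> \<mu> \<and> x \<in> Kt \<mu>", OF conjI[OF assms]] .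
  have "?m \<le> \<nu>" using Least_le[of "\<lambda>\<mu>. n \<le> \<mu> \<and> x \<in> Kt \<mu>", OF conjI[OF assms]] .
  then show ?thesis unfolding Tn_def using Tnu_indep[of n ?m \<nu> x] m by simp
qed

end


lemma lin_dep:
  fixes C :: "'j \<Rightarrow> 'e \<Rightarrow> 'a::field"
  assumes F: "is_subfield F" and fE: "finite E"
  shows "finite J \<Longrightarrow> card J > card E \<Longrightarrow> (\<forall>j\<in>J. \<forall>e\<in>E. C j e \<in> F) \<Longrightarrow>
    \<exists>a. (\<forall>j\<in>J. a j \<in> F) \<and> (\<exists>j\<in>J. a j \<noteq> 0) \<and> (\<forall>e\<in>E. (\<Sum>j\<in>J. a j * C j e) = 0)"
  using fE
proof (induction E arbitrary: J C rule: finite_induct)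
  case empty
  then obtain j0 where "j0 \<in> J" by fastforce
  then show ?case
    by (intro exI[of _ "\<lambda>j. if j = j0 then 1 else 0"]) (auto intro: subfield_0[OF F] subfield_1[OF F])
next
  case (insert e E)
  show ?case
  proof (cases "\<forall>j\<in>J. C j e = 0")
    case True
    have "card J > card E" using insert by simp
    then obtain a where a: "\<forall>j\<in>J. a j \<in> F" "\<exists>j\<in>J. a j \<noteq> 0" "\<forall>e\<in>E. (\<Sum>j\<in>J. a j * C j e) = 0"
      using insert.IH[of J C] insert.prems by auto
    then show ?thesis using True by (intro exI[of _ a]) auto
  next
    case False
    then obtain j0 where j0: "j0 \<in> J" "C j0 e \<noteq> 0" by blast
    let ?J = "J - {j0}"
    define C' where "C' j i = C j i - C j e / C j0 e * C j0 i" for j i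
    have "card ?J > card E" using insert j0 by (simp add: card_Diff_singleton)
    moreover have "\<forall>j\<in>?J. \<forall>i\<in>E. C' j i \<in> F"
      using insert.prems(3) j0 unfolding C'_def
      by (auto intro!: subfield_diff[OF F] subfield_mult[OF F] subfield_divide[OF F])
    ultimately obtain a where a: "\<forall>j\<in>?J. a j \<in> F" "\<exists>j\<in>?J. a j \<noteq> 0" "\<forall>i\<in>E. (\<Sum>j\<in>?J. a j * C' j i) = 0"
      using insert.IH[of ?J C'] insert.prems by auto
    define s where "s = - (\<Sum>j\<in>?J. a j * C j e) / C j0 e"
    define a' where "a' j = (if j = j0 then s else a j)" for j
    have fJ: "finite J" by fact
    have split: "(\<Sum>j\<in>J. a' j * C j i) = s * C j0 i + (\<Sum>j\<in>?J. a j * C j i)" for i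
      using sum.remove[OF fJ j0(1), of "\<lambda>j. a' j * C j i"] by (simp add: a'_def)
    have sF: "s \<in> F" unfolding s_def using insert.prems(3) a(1) j0
      by (auto intro!: subfield_divide[OF F] subfield_uminus[OF F] subfield_sum[OF F] subfield_mult[OF F])
    show ?thesis
    proof (intro exI[of _ a'] conjI ballI)
      show "a' j \<in> F" if "j \<in> J" for j using a(1) sF that by (auto simp: a'_def)
      show "\<exists>j\<in>J. a' j \<noteq> 0" using a(2) by (auto simp: a'_def)
      fix i assume i: "i \<in> insert e E"
      show "(\<Sum>j\<in>J. a' j * C j i) = 0"
      proof (cases "i = e")
        case True then show ?thesis using j0 by (simp add: split s_def)
      next
        case False
        then have iE: "i \<in> E" using i by simp
        have "(\<Sum>j\<in>?J. a j * C' j i) = (\<Sum>j\<in>?J. a j * C j i - a j * C j e / C j0 e * C j0 i)"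
          by (rule sum.cong) (auto simp: C'_def right_diff_distrib)
        also have "\<dots> = (\<Sum>j\<in>?J. a j * C j i) - (\<Sum>j\<in>?J. a j * C j e) / C j0 e * C j0 i"
          by (simp only: sum_subtractf sum_distrib_right sum_divide_distrib)
        finally have "(\<Sum>j\<in>?J. a j * C' j i) = (\<Sum>j\<in>?J. a j * C j i) - (\<Sum>j\<in>?J. a j * C j e) / C j0 e * C j0 i" .
        then have "(\<Sum>j\<in>?J. a j * C j i) + s * C j0 i = 0"
          using a(3) iE by (simp add: s_def)
        then show ?thesis by (simp add: split add.commute)
      qed
    qed
  qed
qed

lemma algebraic:
  assumes F: "is_subfield F" and L: "is_subfield L" and B: "fbasis F L I b" and x: "x \<in> L"
  shows "\<exists>q. q \<noteq> 0 \<and> (\<forall>k. coeff q k \<in> F) \<and> poly q x = 0"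
proof -
  have fI: "finite I" using B by (simp add: fbasis_def)
  define C where "C k i = fcoords F I b (x ^ k) i" for k i
  have xk: "x ^ k \<in> L" for k using x by (induction k) (auto intro: subfield_mult[OF L] subfield_1[OF L])
  obtain a where a: "\<forall>j\<in>{..card I}. a j \<in> F" "\<exists>j\<in>{..card I}. a j \<noteq> 0"
    "\<forall>e\<in>I. (\<Sum>j\<in>{..card I}. a j * C j e) = 0"
    using lin_dep[OF F fI, of "{..card I}" C] fcoords(1)[OF B xk] unfolding C_def by auto
  define q where "q = (\<Sum>j\<in>{..card I}. monom (a j) j)"
  have cq: "coeff q k = (if k \<le> card I then a k else 0)" for k
    unfolding q_def by (simp add: coeff_sum coeff_monom)
  have "(\<Sum>j\<in>{..card I}. a j * x ^ j) = (\<Sum>j\<in>{..card I}. a j * (\<Sum>i\<in>I. C j i * b i))"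
    using fcoords(3)[OF B xk] unfolding C_def by simp
  also have "\<dots> = (\<Sum>i\<in>I. (\<Sum>j\<in>{..card I}. a j * C j i) * b i)"
    by (simp add: sum_distrib_left sum_distrib_right mult.assoc sum.swap[of _ I])
  also have "\<dots> = 0" using a(3) by simp
  finally have "poly q x = 0" unfolding q_def by (simp add: poly_sum poly_monom)
  moreover have "q \<noteq> 0" using a(2) cq by (metis atMost_iff coeff_0)
  moreover have "\<forall>k. coeff q k \<in> F" using cq a(1) subfield_0[OF F] by auto
  ultimately show ?thesis by blast
qed


definition homL :: "('a::field \<Rightarrow> 'a) \<Rightarrow> 'a set \<Rightarrow> bool" where
  "homL \<sigma> L \<longleftrightarrow> \<sigma> 1 = 1 \<and> (\<forall>x\<in>L. \<forall>y\<in>L. \<sigma> (x + y) = \<sigma> x + \<sigma> y \<and> \<sigma> (x * y) = \<sigma> x * \<sigma> y)"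

lemma field_auts_homL: "\<sigma> \<in> field_auts L F \<Longrightarrow> homL \<sigma> L"
  unfolding field_auts_def homL_def by auto

context
  fixes \<sigma> :: "'a::field \<Rightarrow> 'a" and L :: "'a set"
  assumes L: "is_subfield L" and h: "homL \<sigma> L"
begin

lemma hom_add: "x \<in> L \<Longrightarrow> y \<in> L \<Longrightarrow> \<sigma> (x + y) = \<sigma> x + \<sigma> y"
  and hom_mult: "x \<in> L \<Longrightarrow> y \<in> L \<Longrightarrow> \<sigma> (x * y) = \<sigma> x * \<sigma> y"
  and hom_1: "\<sigma> 1 = 1"
  using h unfolding homL_def by auto

lemma hom_0: "\<sigma> 0 = 0"
proof -
  have "\<sigma> 0 = \<sigma> 0 + \<sigma> 0" using hom_add[of 0 0] subfield_0[OF L] by simp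
  then show ?thesis by (metis add_cancel_right_right)
qed

lemma hom_uminus: "x \<in> L \<Longrightarrow> \<sigma> (- x) = - \<sigma> x"
proof -
  assume x: "x \<in> L"
  have "\<sigma> x + \<sigma> (- x) = 0" using hom_add[of x "- x"] subfield_uminus[OF L x] x hom_0 by simp
  then show ?thesis by (metis neg_eq_iff_add_eq_0)
qed

lemma hom_diff: "x \<in> L \<Longrightarrow> y \<in> L \<Longrightarrow> \<sigma> (x - y) = \<sigma> x - \<sigma> y"
  using hom_add[of x "- y"] hom_uminus[of y] subfield_uminus[OF L, of y] by simp

lemma hom_sum: "(\<And>i. i \<in> A \<Longrightarrow> f i \<in> L) \<Longrightarrow> \<sigma> (sum f A) = (\<Sum>i\<in>A. \<sigma> (f i))"
  by (induction A rule: infinite_finite_induct)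
     (auto simp: hom_0 hom_add subfield_sum[OF L])

lemma hom_power: "x \<in> L \<Longrightarrow> \<sigma> (x ^ n) = \<sigma> x ^ n"
  by (induction n) (auto simp: hom_1 hom_mult subfield_power[OF L])

lemma coeff_lin: "coeff ([:-z,1:] * (P::'a poly)) k = - z * coeff P k + (if k = 0 then 0 else coeff P (k - 1))"
  by (simp add: mult_pCons_left coeff_pCons split: nat.split)

lemma prod_lin_coeffs:
  assumes "finite Orb" "Orb \<subseteq> L"
  shows "(\<forall>k. coeff (\<Prod>z\<in>Orb. [:-z,1:]) k \<in> L) \<and>
         (\<forall>k. \<sigma> (coeff (\<Prod>z\<in>Orb. [:-z,1:]) k) = coeff (\<Prod>z\<in>Orb. [:- \<sigma> z,1:]) k)"
  using assms
proof (induction Orb rule: finite_induct)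
  case empty
  show ?case by (auto simp: hom_0 hom_1 subfield_0[OF L] subfield_1[OF L])
next
  case (insert z Orb)
  let ?P = "\<Prod>z\<in>Orb. [:-z,1:]"
  have zL: "z \<in> L" and IH: "\<forall>k. coeff ?P k \<in> L" "\<forall>k. \<sigma> (coeff ?P k) = coeff (\<Prod>z\<in>Orb. [:- \<sigma> z,1:]) k"
    using insert by auto
  have c: "coeff (\<Prod>x\<in>insert z Orb. [:-x,1:]) k = - z * coeff ?P k + (if k = 0 then 0 else coeff ?P (k - 1))" for k
    by (subst prod.insert[OF insert(1,2)]) (rule coeff_lin)
  have c': "coeff (\<Prod>x\<in>insert z Orb. [:- \<sigma> x,1:]) k =
      - \<sigma> z * coeff (\<Prod>z\<in>Orb. [:- \<sigma> z,1:]) k + (if k = 0 then 0 else coeff (\<Prod>z\<in>Orb. [:- \<sigma> z,1:]) (k - 1))" for k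
    by (subst prod.insert[OF insert(1,2)]) (rule coeff_lin)
  have mem: "- z * coeff ?P k \<in> L" for k using zL IH by (auto intro: subfield_mult[OF L] subfield_uminus[OF L])
  have mem2: "(if k = 0 then 0 else coeff ?P (k - 1)) \<in> L" for k using IH subfield_0[OF L] by auto
  show ?case
  proof (intro conjI allI)
    fix k
    show "coeff (\<Prod>x\<in>insert z Orb. [:-x,1:]) k \<in> L" unfolding c by (rule subfield_add[OF L mem mem2])
    have e1: "\<sigma> (coeff (\<Prod>x\<in>insert z Orb. [:-x,1:]) k) = \<sigma> (- z * coeff ?P k) + \<sigma> (if k = 0 then 0 else coeff ?P (k - 1))"
      unfolding c by (rule hom_add[OF mem mem2])
    have e2: "\<sigma> (- z * coeff ?P k) = \<sigma> (- z) * \<sigma> (coeff ?P k)"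
      by (rule hom_mult[OF subfield_uminus[OF L zL]]) (use IH in blast)
    have e3: "\<sigma> (if k = 0 then 0 else coeff ?P (k - 1)) = (if k = 0 then 0 else coeff (\<Prod>z\<in>Orb. [:- \<sigma> z,1:]) (k - 1))"
      using IH hom_0 by simp
    show "\<sigma> (coeff (\<Prod>x\<in>insert z Orb. [:-x,1:]) k) = coeff (\<Prod>x\<in>insert z Orb. [:- \<sigma> x,1:]) k"
      unfolding e1 e2 e3 c' hom_uminus[OF zL] using IH by simp
  qed
qed

lemma poly_hom:
  assumes F: "F \<subseteq> L" and cF: "\<forall>k. coeff p k \<in> F" and fx: "\<forall>a\<in>F. \<sigma> a = a" and z: "z \<in> L"
  shows "\<sigma> (poly p z) = poly p (\<sigma> z)"
proof -
  have "\<sigma> (poly p z) = \<sigma> (\<Sum>i\<le>degree p. coeff p i * z ^ i)" by (simp add: poly_altdef)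
  also have "\<dots> = (\<Sum>i\<le>degree p. \<sigma> (coeff p i * z ^ i))"
    by (rule hom_sum) (use cF F z in \<open>auto intro!: subfield_mult[OF L] subfield_power[OF L]\<close>)
  also have "\<dots> = (\<Sum>i\<le>degree p. \<sigma> (coeff p i) * \<sigma> z ^ i)"
  proof (rule sum.cong[OF refl])
    fix i
    have "coeff p i \<in> L" "z ^ i \<in> L" using cF F z subfield_power[OF L] by auto
    then show "\<sigma> (coeff p i * z ^ i) = \<sigma> (coeff p i) * \<sigma> z ^ i"
      using hom_mult hom_power[OF z] by simp
  qed
  also have "\<dots> = poly p (\<sigma> z)" using cF fx by (simp add: poly_altdef)
  finally show ?thesis .
qed

end

lemma field_auts_comp:
  assumes "\<sigma> \<in> field_auts L F" "\<tau> \<in> field_auts L F"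
  shows "\<sigma> \<circ> \<tau> \<in> field_auts L F"
proof -
  have "\<tau> x \<in> L" if "x \<in> L" for x using assms(2) that by (auto simp: field_auts_def bij_betw_def)
  then show ?thesis using assms unfolding field_auts_def by (auto intro: bij_betw_trans)
qed

lemma id_field_auts: "id \<in> field_auts L F"
  unfolding field_auts_def by auto

lemma artin_normal:
  assumes F: "is_subfield F" and L: "is_subfield L" and K: "is_subfield K" and FL: "F \<subseteq> L" and LK: "L \<subseteq> K"
    and B: "fbasis F L I b"
    and gal: "{x\<in>L. \<forall>\<sigma>\<in>field_auts L F. \<sigma> x = x} = F"
    and g: "g \<in> field_auts K F" and x: "x \<in> L"
  shows "g x \<in> L"
proof -
  let ?G = "field_auts L F"
  obtain q where q: "q \<noteq> 0" "\<forall>k. coeff q k \<in> F" "poly q x = 0" using algebraic[OF F L B x] by blast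
  define Orb where "Orb = (\<lambda>\<sigma>. \<sigma> x) ` ?G"
  have OrbL: "Orb \<subseteq> L" unfolding Orb_def using x by (auto simp: field_auts_def bij_betw_def)
  have "Orb \<subseteq> {z. poly q z = 0}"
  proof
    fix w assume "w \<in> Orb"
    then obtain \<sigma> where \<sigma>: "\<sigma> \<in> ?G" "w = \<sigma> x" unfolding Orb_def by blast
    have "\<sigma> (poly q x) = poly q (\<sigma> x)"
      by (rule poly_hom[OF L field_auts_homL[OF \<sigma>(1)] FL q(2) _ x]) (use \<sigma>(1) in \<open>auto simp: field_auts_def\<close>)
    then show "w \<in> {z. poly q z = 0}" using q(3) hom_0[OF L field_auts_homL[OF \<sigma>(1)]] \<sigma> by simp
  qed
  then have fO: "finite Orb" using poly_roots_finite[OF q(1)] finite_subset by blast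
  define p where "p = (\<Prod>z\<in>Orb. [:-z,1:])"
  have pfix: "\<sigma> (coeff p k) = coeff p k" if \<sigma>: "\<sigma> \<in> ?G" for \<sigma> k
  proof -
    have hs: "homL \<sigma> L" using field_auts_homL[OF \<sigma>] .
    have inj: "inj_on \<sigma> Orb" using \<sigma> OrbL by (auto simp: field_auts_def bij_betw_def intro: inj_on_subset)
    have sub: "\<sigma> ` Orb \<subseteq> Orb"
    proof
      fix w assume "w \<in> \<sigma> ` Orb"
      then obtain \<tau> where \<tau>: "\<tau> \<in> ?G" "w = \<sigma> (\<tau> x)" unfolding Orb_def by blast
      then have "w = (\<sigma> \<circ> \<tau>) x" by simp
      then show "w \<in> Orb" unfolding Orb_def using field_auts_comp[OF \<sigma> \<tau>(1)] by blast
    qed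
    have eq: "\<sigma> ` Orb = Orb"
      using card_image[OF inj] sub fO by (simp add: card_subset_eq)
    have "\<sigma> (coeff p k) = coeff (\<Prod>z\<in>Orb. [:- \<sigma> z,1:]) k"
      using prod_lin_coeffs[OF L hs fO OrbL] unfolding p_def by blast
    also have "(\<Prod>z\<in>Orb. [:- \<sigma> z,1:]) = (\<Prod>w\<in>\<sigma> ` Orb. [:- w,1:])"
      using prod.reindex[OF inj, of "\<lambda>w. [:- w,1:]"] by simp
    finally show ?thesis using eq p_def by simp
  qed
  have pF: "coeff p k \<in> F" for k
  proof -
    have "coeff p k \<in> L"
      using prod_lin_coeffs[OF L field_auts_homL[OF id_field_auts] fO OrbL] unfolding p_def by blast
    then show ?thesis using pfix gal by blast
  qed
  have xO: "x \<in> Orb" unfolding Orb_def by (rule image_eqI[of _ _ id]) (auto intro: id_field_auts)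
  have "poly p x = 0" unfolding p_def using fO xO by (simp add: poly_prod)
  moreover have "g (poly p x) = poly p (g x)"
    by (rule poly_hom[OF K field_auts_homL[OF g] _ allI[OF pF]]) (use FL LK x g in \<open>auto simp: field_auts_def\<close>)
  ultimately have "poly p (g x) = 0" using hom_0[OF K field_auts_homL[OF g]] by simp
  then have "(\<Prod>z\<in>Orb. g x - z) = 0" unfolding p_def by (simp add: poly_prod)
  then have "g x \<in> Orb" using fO by simp
  then show ?thesis using OrbL by blast
qed


lemma fbasis_hom:
  assumes F: "is_subfield F" and L: "is_subfield L" and K: "is_subfield K"
    and FL: "F \<subseteq> L" and LK: "L \<subseteq> K"
    and hg: "homL g K" and hg': "homL g' K"
    and inv1: "\<And>x. x \<in> K \<Longrightarrow> g' (g x) = x" and inv2: "\<And>x. x \<in> K \<Longrightarrow> g (g' x) = x"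
    and gF: "\<And>x. x \<in> F \<Longrightarrow> g x \<in> F" and gL: "\<And>x. x \<in> L \<Longrightarrow> g x \<in> L"
    and g'F: "\<And>x. x \<in> F \<Longrightarrow> g' x \<in> F" and g'L: "\<And>x. x \<in> L \<Longrightarrow> g' x \<in> L"
    and B: "fbasis F L I b"
  shows "fbasis F L I (g \<circ> b)" "\<And>x. x \<in> L \<Longrightarrow> ftrace F I (g \<circ> b) (g x) = g (ftrace F I b x)"
proof -
  have fI: "finite I" and bL: "\<And>i. i \<in> I \<Longrightarrow> b i \<in> L" using B by (auto simp: fbasis_def)
  have FK: "\<And>x. x \<in> F \<Longrightarrow> x \<in> K" using FL LK by auto
  have LK': "\<And>x. x \<in> L \<Longrightarrow> x \<in> K" using LK by auto
  have img: "g (\<Sum>i\<in>I. c i * b i) = (\<Sum>i\<in>I. g (c i) * (g \<circ> b) i)" if "\<forall>i\<in>I. c i \<in> F" for c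
  proof -
    have "g (\<Sum>i\<in>I. c i * b i) = (\<Sum>i\<in>I. g (c i * b i))"
      by (rule hom_sum[OF K hg]) (use that bL FK LK' in \<open>auto intro: subfield_mult[OF K]\<close>)
    also have "\<dots> = (\<Sum>i\<in>I. g (c i) * (g \<circ> b) i)"
      by (rule sum.cong[OF refl]) (use that bL FK LK' hom_mult[OF K hg] in auto)
    finally show ?thesis .
  qed
  have img': "g' (\<Sum>i\<in>I. c i * (g \<circ> b) i) = (\<Sum>i\<in>I. g' (c i) * b i)" if "\<forall>i\<in>I. c i \<in> F" for c
  proof -
    have "g' (\<Sum>i\<in>I. c i * (g \<circ> b) i) = (\<Sum>i\<in>I. g' (c i * (g \<circ> b) i))"
      by (rule hom_sum[OF K hg']) (use that bL FK LK' gL in \<open>auto intro: subfield_mult[OF K]\<close>)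
    also have "\<dots> = (\<Sum>i\<in>I. g' (c i) * b i)"
      by (rule sum.cong[OF refl]) (use that bL FK LK' gL hom_mult[OF K hg'] inv1 in auto)
    finally show ?thesis .
  qed
  show GB: "fbasis F L I (g \<circ> b)" unfolding fbasis_def
    proof (intro conjI ballI)
      show "finite I" by fact
      show "(g \<circ> b) ` I \<subseteq> L" using bL gL by auto
      fix w assume w: "w \<in> L"
      have gw: "g' w \<in> L" using g'L w .
      show "\<exists>!c. (\<forall>i\<in>I. c i \<in> F) \<and> (\<forall>i. i \<notin> I \<longrightarrow> c i = 0) \<and> w = (\<Sum>i\<in>I. c i * (g \<circ> b) i)"
      proof (rule ex1I[of _ "\<lambda>i. g (fcoords F I b (g' w) i)"])
        have "w = g (g' w)" using inv2 LK' w by simp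
        also have "\<dots> = g (\<Sum>i\<in>I. fcoords F I b (g' w) i * b i)" using fcoords(3)[OF B gw] by simp
        also have "\<dots> = (\<Sum>i\<in>I. g (fcoords F I b (g' w) i) * (g \<circ> b) i)"
          by (rule img) (use fcoords(1)[OF B gw] in auto)
        finally show "(\<forall>i\<in>I. g (fcoords F I b (g' w) i) \<in> F) \<and> (\<forall>i. i \<notin> I \<longrightarrow> g (fcoords F I b (g' w) i) = 0) \<and>
            w = (\<Sum>i\<in>I. g (fcoords F I b (g' w) i) * (g \<circ> b) i)"
          using fcoords(1,2)[OF B gw] gF hom_0[OF K hg] by auto
        fix e assume e: "(\<forall>i\<in>I. e i \<in> F) \<and> (\<forall>i. i \<notin> I \<longrightarrow> e i = 0) \<and> w = (\<Sum>i\<in>I. e i * (g \<circ> b) i)"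
        have "g' w = (\<Sum>i\<in>I. g' (e i) * b i)" using e img' by auto
        then have "fcoords F I b (g' w) = (\<lambda>i. g' (e i))"
          by (intro fcoords_unique[OF B gw]) (use e g'F hom_0[OF K hg'] in auto)
        then show "e = (\<lambda>i. g (fcoords F I b (g' w) i))"
        proof -
          assume eq: "fcoords F I b (g' w) = (\<lambda>i. g' (e i))"
          show ?thesis
          proof
            fix i show "e i = g (fcoords F I b (g' w) i)"
              by (cases "i \<in> I") (use e eq inv2 FK hom_0[OF K hg] hom_0[OF K hg'] in auto)
          qed
        qed
      qed
    qed
  have coords_img: "fcoords F I (g \<circ> b) v = (\<lambda>i. g (fcoords F I b (g' v) i))" if v: "v \<in> L" for v
  proof (rule fcoords_unique[OF GB])
    have gv: "g' v \<in> L" using g'L v .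
    show "v \<in> L" by fact
    show "\<forall>i\<in>I. g (fcoords F I b (g' v) i) \<in> F" using fcoords(1)[OF B gv] gF by auto
    show "g (fcoords F I b (g' v) i) = 0" if "i \<notin> I" for i using fcoords(2)[OF B gv that] hom_0[OF K hg] by simp
    have "v = g (g' v)" using inv2 LK' v by simp
    also have "\<dots> = g (\<Sum>i\<in>I. fcoords F I b (g' v) i * b i)" using fcoords(3)[OF B gv] by simp
    also have "\<dots> = (\<Sum>i\<in>I. g (fcoords F I b (g' v) i) * (g \<circ> b) i)"
      by (rule img) (use fcoords(1)[OF B gv] in auto)
    finally show "v = (\<Sum>i\<in>I. g (fcoords F I b (g' v) i) * (g \<circ> b) i)" .
  qed
  fix x assume x: "x \<in> L"
  have "ftrace F I (g \<circ> b) (g x) = (\<Sum>i\<in>I. g (fcoords F I b (g' (g x * g (b i))) i))"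
    unfolding ftrace_def
  proof (rule sum.cong[OF refl])
    fix i assume i: "i \<in> I"
    have "g x * (g \<circ> b) i \<in> L" using gL bL i x by (auto intro!: subfield_mult[OF L])
    from coords_img[OF this] show "fcoords F I (g \<circ> b) (g x * (g \<circ> b) i) i = g (fcoords F I b (g' (g x * g (b i))) i)"
      by simp
  qed
  also have "\<dots> = (\<Sum>i\<in>I. g (fcoords F I b (x * b i) i))"
  proof (rule sum.cong[OF refl])
    fix i assume i: "i \<in> I"
    have xK: "x \<in> K" "b i \<in> K" using x bL[OF i] LK' by auto
    then have "g x * g (b i) = g (x * b i)" using hom_mult[OF K hg] by simp
    moreover have "x * b i \<in> K" using xK by (auto intro: subfield_mult[OF K])
    ultimately show "g (fcoords F I b (g' (g x * g (b i))) i) = g (fcoords F I b (x * b i) i)"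
      using inv1 by simp
  qed
  also have "\<dots> = g (ftrace F I b x)" unfolding ftrace_def
    by (rule hom_sum[OF K hg, symmetric]) (use fcoords(1)[OF B subfield_mult[OF L x bL]] FK in auto)
  finally show "ftrace F I (g \<circ> b) (g x) = g (ftrace F I b x)" .
qed


locale gtower = tower +
  assumes gal: "\<And>n. galois_ext (Kt 0) (Kt n)"
begin

abbreviation "KK \<equiv> tower_union Kt"

lemma Kt_KK: "Kt n \<subseteq> KK" unfolding tower_union_def by auto

lemma KK_mem: "x \<in> KK \<Longrightarrow> \<exists>n. x \<in> Kt n" unfolding tower_union_def by auto

lemma KK_mem_ge: "x \<in> KK \<Longrightarrow> \<exists>\<nu>\<ge>m. x \<in> Kt \<nu>"
proof -
  assume "x \<in> KK"
  then obtain n where "x \<in> Kt n" using KK_mem by blast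
  then have "x \<in> Kt (max n m)" using le_mono[of n "max n m"] by auto
  then show ?thesis by (intro exI[of _ "max n m"]) auto
qed

lemma KK_sub: "is_subfield KK"
proof -
  have two: "\<exists>\<nu>. x \<in> Kt \<nu> \<and> y \<in> Kt \<nu>" if xK: "x \<in> KK" and yK: "y \<in> KK" for x y
  proof -
    obtain n where n: "x \<in> Kt n" using KK_mem xK by blast
    obtain m where m: "y \<in> Kt m" using KK_mem yK by blast
    show ?thesis using n m le_mono[of n "max n m"] le_mono[of m "max n m"]
      by (intro exI[of _ "max n m"]) auto
  qed
  show ?thesis unfolding is_subfield_def
  proof (intro conjI ballI impI)
    show "0 \<in> KK" "1 \<in> KK" using Kt_KK[of 0] subfield_0[OF sub] subfield_1[OF sub] by auto
    fix x y assume xy: "x \<in> KK" "y \<in> KK"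
    then obtain \<nu> where "x \<in> Kt \<nu>" "y \<in> Kt \<nu>" using two by blast
    then have "x + y \<in> Kt \<nu>" "x - y \<in> Kt \<nu>" "x * y \<in> Kt \<nu>"
      using subfield_add[OF sub] subfield_diff[OF sub] subfield_mult[OF sub] by auto
    then show "x + y \<in> KK" "x - y \<in> KK" "x * y \<in> KK"
      using Kt_KK[of \<nu>] by auto
  next
    fix x assume "x \<in> KK" "x \<noteq> 0"
    then obtain n where "x \<in> Kt n" using KK_mem by blast
    then have "inverse x \<in> Kt n" using subfield_inverse[OF sub] by auto
    then show "inverse x \<in> KK" using Kt_KK[of n] by auto
  qed
qed

lemma basis0: "\<exists>I (b :: nat \<Rightarrow> 'a). fbasis (Kt 0) (Kt n) I b"
  using basis_exists[of 0 n] by simp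

lemma normal:
  assumes g: "g \<in> field_auts KK (Kt 0)" and x: "x \<in> Kt n"
  shows "g x \<in> Kt n"
proof -
  obtain I and b :: "nat \<Rightarrow> 'a" where B: "fbasis (Kt 0) (Kt n) I b" using basis0 by blast
  show ?thesis
    using artin_normal[OF sub sub KK_sub K0_sub Kt_KK B _ g x] gal[of n] by (simp add: galois_ext_def)
qed

lemma aut_props:
  assumes g: "g \<in> field_auts KK (Kt 0)"
  shows "homL g KK" "bij_betw g KK KK" "\<And>a. a \<in> Kt 0 \<Longrightarrow> g a = a"
  using g field_auts_homL[OF g] by (auto simp: field_auts_def)

lemma inv_aut:
  assumes g: "g \<in> field_auts KK (Kt 0)"
  shows "inv_into KK g \<in> field_auts KK (Kt 0)"
proof -
  let ?h = "inv_into KK g"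
  have bij: "bij_betw g KK KK" and hg: "homL g KK" and fx: "\<And>a. a \<in> Kt 0 \<Longrightarrow> g a = a"
    using aut_props[OF g] by auto
  have inj: "inj_on g KK" using bij by (simp add: bij_betw_def)
  have bh: "bij_betw ?h KK KK" using bij_betw_inv_into[OF bij] .
  have hK: "?h x \<in> KK" if "x \<in> KK" for x using bh that by (auto simp: bij_betw_def)
  have gh: "g (?h x) = x" if "x \<in> KK" for x using bij that by (simp add: bij_betw_inv_into_right)
  have hg': "?h (g x) = x" if "x \<in> KK" for x using inj that by simp
  have "?h 1 = 1" using hg'[of 1] hom_1[OF KK_sub hg] subfield_1[OF KK_sub] by simp
  moreover have "?h (x + y) = ?h x + ?h y \<and> ?h (x * y) = ?h x * ?h y" if "x \<in> KK" "y \<in> KK" for x y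
  proof -
    have e1: "g (?h x + ?h y) = x + y" using hom_add[OF KK_sub hg hK hK] gh that by simp
    have e2: "g (?h x * ?h y) = x * y" using hom_mult[OF KK_sub hg hK hK] gh that by simp
    have m1: "?h x + ?h y \<in> KK" using hK that subfield_add[OF KK_sub] by blast
    have m2: "?h x * ?h y \<in> KK" using hK that subfield_mult[OF KK_sub] by blast
    have "?h (x + y) = ?h x + ?h y" using hg'[OF m1] e1 by simp
    moreover have "?h (x * y) = ?h x * ?h y" using hg'[OF m2] e2 by simp
    ultimately show ?thesis by simp
  qed
  moreover have "?h a = a" if "a \<in> Kt 0" for a using hg'[of a] fx[OF that] Kt_KK[of 0] that by auto
  ultimately show ?thesis using bh unfolding field_auts_def by auto
qed

lemma inv_props:
  assumes g: "g \<in> field_auts KK (Kt 0)"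
  shows "\<And>x. x \<in> KK \<Longrightarrow> g (inv_into KK g x) = x" "\<And>x. x \<in> KK \<Longrightarrow> inv_into KK g (g x) = x"
  using aut_props(2)[OF g] by (auto simp: bij_betw_inv_into_right bij_betw_def)

lemma g_iff:
  assumes g: "g \<in> field_auts KK (Kt 0)" and x: "x \<in> KK"
  shows "g x \<in> Kt n \<longleftrightarrow> x \<in> Kt n"
  using normal[OF g] normal[OF inv_aut[OF g], of "g x"] inv_props(2)[OF g x] by auto

lemma gK: "g \<in> field_auts KK (Kt 0) \<Longrightarrow> x \<in> KK \<Longrightarrow> g x \<in> KK"
  using aut_props(2) by (auto simp: bij_betw_def)

lemma Tnu_g:
  assumes g: "g \<in> field_auts KK (Kt 0)" and n: "n \<le> \<nu>" and x: "x \<in> Kt \<nu>"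
  shows "g (Tnu Kt n \<nu> x) = Tnu Kt n \<nu> (g x)"
proof -
  obtain I and b :: "nat \<Rightarrow> 'a" where B: "fbasis (Kt n) (Kt \<nu>) I b" using basis_exists[OF n] by blast
  let ?h = "inv_into KK g"
  have hh: "homL ?h KK" using aut_props(1)[OF inv_aut[OF g]] .
  have i1: "\<And>x. x \<in> KK \<Longrightarrow> ?h (g x) = x" using inv_props(2)[OF g] by blast
  have i2: "\<And>x. x \<in> KK \<Longrightarrow> g (?h x) = x" using inv_props(1)[OF g] by blast
  have n1: "\<And>x. x \<in> Kt n \<Longrightarrow> g x \<in> Kt n" using normal[OF g] by blast
  have n2: "\<And>x. x \<in> Kt \<nu> \<Longrightarrow> g x \<in> Kt \<nu>" using normal[OF g] by blast
  have n3: "\<And>x. x \<in> Kt n \<Longrightarrow> ?h x \<in> Kt n" using normal[OF inv_aut[OF g]] by blast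
  have n4: "\<And>x. x \<in> Kt \<nu> \<Longrightarrow> ?h x \<in> Kt \<nu>" using normal[OF inv_aut[OF g]] by blast
  have FB1: "fbasis (Kt n) (Kt \<nu>) I (g \<circ> b)"
    by (rule fbasis_hom(1)[where g=g and g'="inv_into KK g", OF sub sub KK_sub le_mono[OF n] Kt_KK aut_props(1)[OF g] hh _ _ _ _ _ _ B])
       (simp_all add: i1 i2 n1 n2 n3 n4)
  have FB2: "ftrace (Kt n) I (g \<circ> b) (g y) = g (ftrace (Kt n) I b y)" if y: "y \<in> Kt \<nu>" for y
    by (rule fbasis_hom(2)[where g=g and g'="inv_into KK g", OF sub sub KK_sub le_mono[OF n] Kt_KK aut_props(1)[OF g] hh _ _ _ _ _ _ B y])
       (simp_all add: i1 i2 n1 n2 n3 n4)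
  note FB = FB1 FB2
  have gx: "g x \<in> Kt \<nu>" using normal[OF g x] .
  have "tr n \<nu> (g x) = g (tr n \<nu> x)"
    using tr_basis(2)[OF n FB(1) gx] tr_basis(2)[OF n B x] FB(2)[OF x] by simp
  moreover have r0: "of_nat (deg 0 n) / of_nat (deg 0 \<nu>) \<in> Kt 0"
    by (intro subfield_divide[OF sub] subfield_of_nat[OF sub])
  moreover have "tr n \<nu> x \<in> KK" using tr_lin(3)[OF n x x subfield_1[OF sub]] Kt_KK by blast
  moreover have "of_nat (deg 0 n) / of_nat (deg 0 \<nu>) \<in> KK" using r0 Kt_KK by blast
  ultimately show ?thesis unfolding Tnu_def'
  proof -
    define r where "r = (of_nat (deg 0 n) / of_nat (deg 0 \<nu>) :: 'a)"
    assume a: "tr n \<nu> (g x) = g (tr n \<nu> x)" "r \<in> Kt 0" "tr n \<nu> x \<in> KK" "r \<in> KK"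
    have "g (r * tr n \<nu> x) = g r * g (tr n \<nu> x)" using hom_mult[OF KK_sub aut_props(1)[OF g]] a by blast
    then show "g (r * tr n \<nu> x) = r * tr n \<nu> (g x)" using aut_props(3)[OF g a(2)] a(1) by simp
  qed
qed

lemma T0_g:
  assumes g: "g \<in> field_auts KK (Kt 0)" and x: "x \<in> KK"
  shows "Tn Kt 0 (g x) = Tn Kt 0 x"
proof -
  obtain \<nu> where \<nu>: "x \<in> Kt \<nu>" using KK_mem x by blast
  have "Tn Kt 0 (g x) = Tnu Kt 0 \<nu> (g x)" using Tn_eq[of 0 \<nu>] normal[OF g \<nu>] by simp
  also have "\<dots> = g (Tnu Kt 0 \<nu> x)" using Tnu_g[OF g _ \<nu>] by simp
  also have "\<dots> = Tnu Kt 0 \<nu> x" using aut_props(3)[OF g] Tnu_lin(3)[of 0 \<nu> x x 1] \<nu> subfield_1[OF sub] by simp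
  also have "\<dots> = Tn Kt 0 x" using Tn_eq[of 0 \<nu>] \<nu> by simp
  finally show ?thesis .
qed

lemma Tn_g:
  assumes g: "g \<in> field_auts KK (Kt 0)" and x: "x \<in> KK"
  shows "g (Tn Kt n x) = Tn Kt n (g x)"
proof -
  obtain \<nu> where \<nu>: "\<nu> \<ge> n" "x \<in> Kt \<nu>" using KK_mem_ge x by blast
  show ?thesis using Tn_eq[OF \<nu>] Tn_eq[OF \<nu>(1) normal[OF g \<nu>(2)]] Tnu_g[OF g \<nu>] by simp
qed

end


context gtower
begin

definition lev where "lev \<xi> = (LEAST n. \<xi> \<in> Kt n)"

lemma lev: "\<xi> \<in> KK \<Longrightarrow> \<xi> \<in> Kt (lev \<xi>)"
  unfolding lev_def using KK_mem LeastI_ex by metis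

lemma lev_le: "\<xi> \<in> Kt n \<Longrightarrow> lev \<xi> \<le> n"
  unfolding lev_def by (rule Least_le)

lemma pairing_lev: "pairing Kt \<xi> y = Tn Kt 0 (\<xi> * y (lev \<xi>))"
  unfolding pairing_def lev_def Let_def ..

lemma Kbar_D: "y \<in> Kbar Kt \<Longrightarrow> y n \<in> Kt n"
  and Kbar_T: "y \<in> Kbar Kt \<Longrightarrow> n < \<nu> \<Longrightarrow> y n = Tnu Kt n \<nu> (y \<nu>)"
  unfolding Kbar_def by auto

lemma Kbar_T': "y \<in> Kbar Kt \<Longrightarrow> n \<le> \<nu> \<Longrightarrow> y n = Tnu Kt n \<nu> (y \<nu>)"
  using Kbar_T[of y n \<nu>] Tnu_self[OF Kbar_D[of y n]] by (cases "n = \<nu>") auto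

lemma embK_y:
  assumes y: "y \<in> Kbar Kt"
  shows "embK Kt (y N) = (\<lambda>n. if n \<le> N then y n else y N)"
proof
  fix n
  have yN: "y N \<in> Kt N" using Kbar_D[OF y] .
  show "embK Kt (y N) n = (if n \<le> N then y n else y N)"
  proof (cases "n \<le> N")
    case True
    then show ?thesis unfolding embK_def using Tn_eq[OF True yN] Kbar_T'[OF y True] by simp
  next
    case False
    then have "y N \<in> Kt n" using yN le_mono[of N n] by auto
    then show ?thesis unfolding embK_def using Tn_eq[of n n] Tnu_self False by simp
  qed
qed

lemma embK_y_Kbar:
  assumes y: "y \<in> Kbar Kt"
  shows "embK Kt (y N) \<in> Kbar Kt"
proof -
  have yN: "y N \<in> Kt N" using Kbar_D[OF y] .
  have yNn: "y N \<in> Kt n" if "N \<le> n" for n using yN le_mono[OF that] by auto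
  show ?thesis unfolding embK_y[OF y] Kbar_def
  proof (intro CollectI conjI allI impI)
    fix n show "(if n \<le> N then y n else y N) \<in> Kt n" using Kbar_D[OF y] yNn by auto
  next
    fix n \<nu> :: nat assume n\<nu>: "n < \<nu>"
    show "(if n \<le> N then y n else y N) = Tnu Kt n \<nu> (if \<nu> \<le> N then y \<nu> else y N)"
    proof (cases "\<nu> \<le> N")
      case True then show ?thesis using Kbar_T[OF y n\<nu>] n\<nu> by simp
    next
      case nN: False
      show ?thesis
      proof (cases "n \<le> N")
        case True
        then show ?thesis using nN Tnu_indep[of n N \<nu> "y N"] yN Kbar_T'[OF y True] by simp
      next
        case False
        then show ?thesis using nN Tnu_indep[of n n \<nu> "y N"] yNn[of n] Tnu_self[of "y N" n] n\<nu> by simp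
      qed
    qed
  qed
qed

lemma E_Kbar:
  assumes g: "g \<in> field_auts KK (Kt 0)" and y: "y \<in> Kbar Kt"
  shows "(\<lambda>n. g (y n)) \<in> Kbar Kt"
  unfolding Kbar_def
proof (intro CollectI conjI allI impI)
  fix n show "g (y n) \<in> Kt n" using normal[OF g Kbar_D[OF y]] .
next
  fix n \<nu> :: nat assume "n < \<nu>"
  then show "g (y n) = Tnu Kt n \<nu> (g (y \<nu>))" using Kbar_T[OF y] Tnu_g[OF g _ Kbar_D[OF y]] by simp
qed

lemma E_emb:
  assumes g: "g \<in> field_auts KK (Kt 0)" and x: "x \<in> KK"
  shows "(\<lambda>n. g (embK Kt x n)) = embK Kt (g x)"
  unfolding embK_def using Tn_g[OF g x] by simp

lemma Tn0_mem: "w \<in> Kt l \<Longrightarrow> Tn Kt 0 w \<in> Kt 0"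
  using Tn_eq[of 0 l w] Tnu_lin(3)[of 0 l w w 1] subfield_1[OF sub] by simp

lemma pairing_mem:
  assumes xi: "\<xi> \<in> KK" and y: "y \<in> Kbar Kt"
  shows "pairing Kt \<xi> y \<in> Kt 0"
  unfolding pairing_lev using lev[OF xi] Kbar_D[OF y] by (intro Tn0_mem subfield_mult[OF sub])

lemma pairing_E:
  assumes g: "g \<in> field_auts KK (Kt 0)" and xi: "\<xi> \<in> KK" and y: "y \<in> Kbar Kt"
  shows "pairing Kt \<xi> (\<lambda>n. g (y n)) = pairing Kt (inv_into KK g \<xi>) y"
proof -
  let ?\<eta> = "inv_into KK g \<xi>"
  have \<eta>: "?\<eta> \<in> KK" using gK[OF inv_aut[OF g] xi] .
  have g\<eta>: "g ?\<eta> = \<xi>" using inv_props(1)[OF g xi] .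
  have "(\<lambda>n. ?\<eta> \<in> Kt n) = (\<lambda>n. \<xi> \<in> Kt n)" using g_iff[OF g \<eta>] g\<eta> by simp
  then have lv: "lev ?\<eta> = lev \<xi>" unfolding lev_def by simp
  let ?l = "lev \<xi>"
  have yl: "y ?l \<in> KK" using Kbar_D[OF y] Kt_KK by blast
  have "pairing Kt \<xi> (\<lambda>n. g (y n)) = Tn Kt 0 (g ?\<eta> * g (y ?l))" using g\<eta> by (simp add: pairing_lev)
  also have "\<dots> = Tn Kt 0 (g (?\<eta> * y ?l))" using hom_mult[OF KK_sub aut_props(1)[OF g] \<eta> yl] by simp
  also have "\<dots> = Tn Kt 0 (?\<eta> * y ?l)" using T0_g[OF g subfield_mult[OF KK_sub \<eta> yl]] .
  also have "\<dots> = pairing Kt ?\<eta> y" using lv by (simp add: pairing_lev)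
  finally show ?thesis .
qed

lemma pairing_approx:
  assumes xi: "\<xi> \<in> KK" and y: "y \<in> Kbar Kt" and N: "lev \<xi> \<le> N"
  shows "pairing Kt \<xi> (embK Kt (y N)) = pairing Kt \<xi> y"
  unfolding pairing_lev embK_y[OF y] using N by simp

lemma separation:
  assumes y: "y \<in> Kbar Kt" and y': "y' \<in> Kbar Kt"
    and eq: "\<forall>\<xi>\<in>KK. pairing Kt \<xi> y = pairing Kt \<xi> y'"
  shows "y = y'"
proof (rule ccontr)
  assume "y \<noteq> y'"
  then obtain n where ne: "y n \<noteq> y' n" by auto
  define d where "d = y n - y' n"
  have d: "d \<in> Kt n" "d \<noteq> 0" using Kbar_D[OF y] Kbar_D[OF y'] ne subfield_diff[OF sub] by (auto simp: d_def)
  define \<xi> where "\<xi> = inverse d"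
  have \<xi>n: "\<xi> \<in> Kt n" using subfield_inverse[OF sub d(1)] \<xi>_def by simp
  have \<xi>K: "\<xi> \<in> KK" using \<xi>n Kt_KK by blast
  let ?l = "lev \<xi>"
  have ln: "?l \<le> n" using lev_le[OF \<xi>n] .
  have \<xi>l: "\<xi> \<in> Kt ?l" using lev[OF \<xi>K] .
  have yl: "y ?l - y' ?l = Tnu Kt ?l n d"
    using Kbar_T'[OF y ln] Kbar_T'[OF y' ln] Tnu_diff[OF ln Kbar_D[OF y] Kbar_D[OF y']] by (simp add: d_def)
  have "\<xi> * (y ?l - y' ?l) = Tnu Kt ?l n (\<xi> * d)"
    using yl Tnu_lin(1)[OF ln d(1) d(1) \<xi>l] by simp
  also have "\<xi> * d = 1" using d(2) \<xi>_def by simp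
  also have "Tnu Kt ?l n 1 = 1" using Tnu_one[OF ln] .
  finally have one: "\<xi> * y ?l - \<xi> * y' ?l = 1" by (simp add: right_diff_distrib)
  have m1: "\<xi> * y ?l \<in> Kt ?l" "\<xi> * y' ?l \<in> Kt ?l"
    using \<xi>l Kbar_D[OF y] Kbar_D[OF y'] subfield_mult[OF sub] by auto
  have "pairing Kt \<xi> y - pairing Kt \<xi> y' = Tnu Kt 0 ?l (\<xi> * y ?l) - Tnu Kt 0 ?l (\<xi> * y' ?l)"
    unfolding pairing_lev using Tn_eq[of 0 ?l] m1 by simp
  also have "\<dots> = Tnu Kt 0 ?l 1" using Tnu_diff[of 0 ?l, OF _ m1] one by simp
  also have "\<dots> = 1" using Tnu_one by simp
  finally show False using eq \<xi>K by simp
qed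

end


context
  fixes F :: "'a::field set" and av :: "'a \<Rightarrow> real"
  assumes F: "is_subfield F" and na: "nonarch_abs F av"
begin

lemma av_props: "x \<in> F \<Longrightarrow> y \<in> F \<Longrightarrow> av (x * y) = av x * av y"
  "x \<in> F \<Longrightarrow> y \<in> F \<Longrightarrow> av (x + y) \<le> max (av x) (av y)"
  "x \<in> F \<Longrightarrow> av x \<ge> 0" "x \<in> F \<Longrightarrow> av x = 0 \<longleftrightarrow> x = 0"
  using na unfolding nonarch_abs_def by auto

lemma av_1: "av 1 = 1"
proof -
  have "av 1 = av 1 * av 1" using av_props(1)[of 1 1] subfield_1[OF F] by simp
  moreover have "av 1 \<noteq> 0" using av_props(4)[of 1] subfield_1[OF F] by simp
  ultimately show ?thesis by simp
qed

lemma av_minus: "x \<in> F \<Longrightarrow> av (- x) = av x"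
proof -
  assume x: "x \<in> F"
  have m1: "-1 \<in> F" using subfield_uminus[OF F subfield_1[OF F]] .
  have "av (-1) * av (-1) = 1" using av_props(1)[OF m1 m1] av_1 by simp
  moreover have "av (-1) \<ge> 0" using av_props(3)[OF m1] .
  ultimately have "av (-1) = 1"
  proof -
    assume a: "av (-1) * av (-1) = 1" "av (-1) \<ge> 0"
    have "(av (-1) - 1) * (av (-1) + 1) = 0" using a(1) by (simp add: algebra_simps)
    then show ?thesis using a(2) by auto
  qed
  then show ?thesis using av_props(1)[OF m1 x] by simp
qed

definition "absopen U \<longleftrightarrow> U \<subseteq> F \<and> (\<forall>x\<in>U. \<exists>e>0. \<forall>y\<in>F. av (y - x) < e \<longrightarrow> y \<in> U)"

lemma istop: "istopology absopen"
  unfolding istopology_def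
proof (intro conjI allI impI)
  fix S T assume S: "absopen S" and T: "absopen T"
  have ST: "absopen S \<and> absopen T" using S T by simp
  show "absopen (S \<inter> T)" unfolding absopen_def
  proof (intro conjI ballI)
    show "S \<inter> T \<subseteq> F" using ST absopen_def by auto
    fix x assume "x \<in> S \<inter> T"
    then obtain e1 e2 where "e1 > 0" "\<forall>y\<in>F. av (y - x) < e1 \<longrightarrow> y \<in> S" "e2 > 0" "\<forall>y\<in>F. av (y - x) < e2 \<longrightarrow> y \<in> T"
      using ST unfolding absopen_def by blast
    then show "\<exists>e>0. \<forall>y\<in>F. av (y - x) < e \<longrightarrow> y \<in> S \<inter> T"
      by (intro exI[of _ "min e1 e2"]) auto
  qed
next
  fix K assume "\<forall>S\<in>K. absopen S"
  then show "absopen (\<Union>K)" unfolding absopen_def by fast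
qed

lemma openin_abs: "openin (abs_topology F av) U \<longleftrightarrow> absopen U"
proof -
  have "abs_topology F av = topology absopen" unfolding abs_topology_def absopen_def by simp
  then show ?thesis using topology_inverse'[OF istop] by simp
qed

lemma topspace_abs: "topspace (abs_topology F av) = F"
proof -
  have "openin (abs_topology F av) F" unfolding openin_abs absopen_def using zero_less_one by blast
  moreover have "U \<subseteq> F" if "openin (abs_topology F av) U" for U using that unfolding openin_abs absopen_def by blast
  ultimately show ?thesis unfolding topspace_def by blast
qed

lemma ball_open: "x \<in> F \<Longrightarrow> e > 0 \<Longrightarrow> openin (abs_topology F av) {y\<in>F. av (y - x) < e}"
  unfolding openin_abs absopen_def
proof (intro conjI ballI)
  fix z assume x: "x \<in> F" and e: "e > 0" and z: "z \<in> {y\<in>F. av (y - x) < e}"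
  show "\<exists>e'>0. \<forall>y\<in>F. av (y - z) < e' \<longrightarrow> y \<in> {y\<in>F. av (y - x) < e}"
  proof (intro exI[of _ e] conjI ballI impI)
    fix y assume y: "y \<in> F" "av (y - z) < e"
    have "av (y - x) = av ((y - z) + (z - x))" by simp
    also have "\<dots> \<le> max (av (y - z)) (av (z - x))"
      using z y by (intro av_props(2) subfield_diff[OF F]) (auto intro: x)
    finally show "y \<in> {y\<in>F. av (y - x) < e}" using y z by auto
  qed (use e in auto)
qed auto

lemma Hausdorff_abs: "Hausdorff_space (abs_topology F av)"
  unfolding Hausdorff_space_def topspace_abs
proof (intro allI impI)
  fix x y assume xy: "x \<in> F \<and> y \<in> F \<and> x \<noteq> y"
  define r where "r = av (x - y)"
  have r: "r > 0" using av_props(3,4)[of "x - y"] subfield_diff[OF F] xy r_def by force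
  show "\<exists>U V. openin (abs_topology F av) U \<and> openin (abs_topology F av) V \<and> x \<in> U \<and> y \<in> V \<and> disjnt U V"
  proof (intro exI conjI)
    show "openin (abs_topology F av) {z\<in>F. av (z - x) < r}" using ball_open xy r by blast
    show "openin (abs_topology F av) {z\<in>F. av (z - y) < r}" using ball_open xy r by blast
    show "x \<in> {z\<in>F. av (z - x) < r}" "y \<in> {z\<in>F. av (z - y) < r}"
      using xy r av_props(4)[OF subfield_0[OF F]] by auto
    show "disjnt {z\<in>F. av (z - x) < r} {z\<in>F. av (z - y) < r}"
      unfolding disjnt_def
    proof (rule ccontr)
      assume "{z\<in>F. av (z - x) < r} \<inter> {z\<in>F. av (z - y) < r} \<noteq> {}"
      then obtain z where z: "z \<in> F" "av (z - x) < r" "av (z - y) < r" by blast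
      have "av (x - z) = av (z - x)" using av_minus[of "z - x"] subfield_diff[OF F] z xy by simp
      then have "av (x - z) < r" using z by simp
      have "r = av ((x - z) + (z - y))" unfolding r_def by simp
      also have "\<dots> \<le> max (av (x - z)) (av (z - y))"
        using z xy by (intro av_props(2) subfield_diff[OF F]) auto
      finally show False using \<open>av (x - z) < r\<close> z by linarith
    qed
  qed
qed

end

lemma limitin_pullback:
  assumes "y \<in> S" "eventually (\<lambda>n. z n \<in> S) Fl" "limitin T (\<lambda>n. \<phi> (z n)) (\<phi> y) Fl"
  shows "limitin (pullback_topology S \<phi> T) z y Fl"
  unfolding limitin_def
proof (intro conjI allI impI)
  show "y \<in> topspace (pullback_topology S \<phi> T)"
    using assms(1,3) unfolding topspace_pullback_topology limitin_def by auto
  fix U assume U: "openin (pullback_topology S \<phi> T) U \<and> y \<in> U"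
  then obtain V where V: "openin T V" "U = \<phi> -` V \<inter> S" unfolding openin_pullback_topology by blast
  then have "eventually (\<lambda>n. \<phi> (z n) \<in> V) Fl" using assms(3) U unfolding limitin_def by auto
  then show "eventually (\<lambda>n. z n \<in> U) Fl" using assms(2) V(2)
    by (auto elim: eventually_elim2)
qed


theorem proposition2:
  fixes Kt :: "nat \<Rightarrow> 'a::field_char_0 set"
    and av :: "'a \<Rightarrow> real"
  assumes local: "nonarch_local_field (Kt 0) av"
    and mono: "\<And>n. Kt n \<subseteq> Kt (Suc n)"
    and fin: "\<And>n. finite_ext (Kt 0) (Kt n)"
    and gal: "\<And>n. galois_ext (Kt 0) (Kt n)"
  shows "\<exists>E :: ('a \<Rightarrow> 'a) \<Rightarrow> (nat \<Rightarrow> 'a) \<Rightarrow> (nat \<Rightarrow> 'a).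
     (\<forall>g \<in> field_auts (tower_union Kt) (Kt 0).
        continuous_map (weak_star_topology Kt av) (weak_star_topology Kt av) (E g) \<and>
        (\<forall>x \<in> tower_union Kt. E g (embK Kt x) = embK Kt (g x))) \<and>
     (\<forall>g \<in> field_auts (tower_union Kt) (Kt 0). \<forall>F.
        continuous_map (weak_star_topology Kt av) (weak_star_topology Kt av) F \<and>
        (\<forall>x \<in> tower_union Kt. F (embK Kt x) = embK Kt (g x)) \<longrightarrow>
        (\<forall>y \<in> Kbar Kt. F y = E g y)) \<and>
     (\<forall>y \<in> Kbar Kt. E id y = y) \<and>
     (\<forall>g \<in> field_auts (tower_union Kt) (Kt 0). \<forall>h \<in> field_auts (tower_union Kt) (Kt 0).
        \<forall>y \<in> Kbar Kt. E (g \<circ> h) y = E g (E h y))"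
proof -
  interpret gtower Kt using mono fin gal by unfold_locales auto
  have na: "nonarch_abs (Kt 0) av" using local by (simp add: nonarch_local_field_def)
  let ?A = "abs_topology (Kt 0) av"
  let ?W = "weak_star_topology Kt av"
  define \<phi> where "\<phi> y = restrict (\<lambda>\<xi>. pairing Kt \<xi> y) KK" for y
  let ?P = "product_topology (\<lambda>_. ?A) KK"
  have Wd: "?W = pullback_topology (Kbar Kt) \<phi> ?P"
    unfolding weak_star_topology_def \<phi>_def by simp
  have topA: "topspace ?A = Kt 0" using topspace_abs[OF sub na] .
  have topW: "topspace ?W = Kbar Kt"
    unfolding Wd topspace_pullback_topology topspace_product_topology topA
    using pairing_mem by (auto simp: \<phi>_def)
  have proj: "continuous_map ?W ?A (\<lambda>y. pairing Kt \<xi> y)" if xi: "\<xi> \<in> KK" for \<xi>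
  proof -
    have "continuous_map ?W ?A ((\<lambda>f. f \<xi>) \<circ> \<phi>)"
      unfolding Wd by (rule continuous_map_pullback[OF continuous_map_product_projection[OF xi]])
    moreover have "(\<lambda>f. f \<xi>) \<circ> \<phi> = (\<lambda>y. pairing Kt \<xi> y)" using xi by (auto simp: \<phi>_def)
    ultimately show ?thesis by simp
  qed
  have cont_into: "continuous_map ?W ?W h"
    if hK: "\<And>y. y \<in> Kbar Kt \<Longrightarrow> h y \<in> Kbar Kt"
      and hc: "\<And>\<xi>. \<xi> \<in> KK \<Longrightarrow> continuous_map ?W ?A (\<lambda>y. pairing Kt \<xi> (h y))" for h
  proof -
    have "continuous_map ?W ?P (\<phi> \<circ> h)"
      unfolding continuous_map_componentwise
    proof (intro conjI ballI)
      show "(\<phi> \<circ> h) ` topspace ?W \<subseteq> extensional KK" by (auto simp: \<phi>_def)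
      fix k assume "k \<in> KK"
      then show "continuous_map ?W ?A (\<lambda>x. (\<phi> \<circ> h) x k)" using hc by (simp add: \<phi>_def)
    qed
    moreover have "topspace ?W \<subseteq> h -` Kbar Kt" using topW hK by auto
    ultimately have "continuous_map ?W (pullback_topology (Kbar Kt) \<phi> ?P) h"
      by (rule continuous_map_pullback')
    then show ?thesis unfolding Wd[symmetric] .
  qed
  have lim: "limitin ?W (\<lambda>N. embK Kt (y N)) y sequentially" if y: "y \<in> Kbar Kt" for y
    unfolding Wd
  proof (rule limitin_pullback)
    show "y \<in> Kbar Kt" by fact
    show "\<forall>\<^sub>F n in sequentially. embK Kt (y n) \<in> Kbar Kt" using embK_y_Kbar[OF y] by simp
    show "limitin ?P (\<lambda>n. \<phi> (embK Kt (y n))) (\<phi> y) sequentially"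
      unfolding limitin_componentwise
    proof (intro conjI ballI)
      show "\<phi> y \<in> extensional KK" by (simp add: \<phi>_def)
      show "\<forall>\<^sub>F n in sequentially. \<phi> (embK Kt (y n)) \<in> topspace ?P"
        using pairing_mem embK_y_Kbar[OF y] by (auto simp: \<phi>_def topA)
      fix \<xi> assume xi: "\<xi> \<in> KK"
      show "limitin ?A (\<lambda>n. \<phi> (embK Kt (y n)) \<xi>) (\<phi> y \<xi>) sequentially"
      proof (rule limitin_eventually)
        show "\<phi> y \<xi> \<in> topspace ?A" using pairing_mem[OF xi y] xi by (simp add: \<phi>_def topA)
        show "\<forall>\<^sub>F n in sequentially. \<phi> (embK Kt (y n)) \<xi> = \<phi> y \<xi>"
          unfolding eventually_sequentially
          using pairing_approx[OF xi y] xi by (auto simp: \<phi>_def)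
      qed
    qed
  qed
  define E where "E g y = (\<lambda>n. g (y n))" for g :: "'a \<Rightarrow> 'a" and y :: "nat \<Rightarrow> 'a"
  have Econt: "continuous_map ?W ?W (E g)" if g: "g \<in> field_auts KK (Kt 0)" for g
  proof (rule cont_into)
    show "E g y \<in> Kbar Kt" if "y \<in> Kbar Kt" for y using E_Kbar[OF g that] by (simp add: E_def)
    fix \<xi> assume xi: "\<xi> \<in> KK"
    show "continuous_map ?W ?A (\<lambda>y. pairing Kt \<xi> (E g y))"
    proof (rule continuous_map_eq[OF proj[OF gK[OF inv_aut[OF g] xi]]])
      fix y assume "y \<in> topspace ?W"
      then have "y \<in> Kbar Kt" using topW by simp
      then show "pairing Kt (inv_into KK g \<xi>) y = pairing Kt \<xi> (E g y)"
        using pairing_E[OF g xi] by (simp add: E_def)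
    qed
  qed
  have Eemb: "E g (embK Kt x) = embK Kt (g x)" if "g \<in> field_auts KK (Kt 0)" "x \<in> KK" for g x
    using E_emb[OF that] by (simp add: E_def)
  show ?thesis
  proof (intro exI[of _ E] conjI ballI allI impI)
    fix g assume g: "g \<in> field_auts KK (Kt 0)"
    show "continuous_map ?W ?W (E g)" using Econt[OF g] .
    fix x assume "x \<in> KK" then show "E g (embK Kt x) = embK Kt (g x)" using Eemb g by blast
  next
    fix g F' y assume g: "g \<in> field_auts KK (Kt 0)"
      and F': "continuous_map ?W ?W F' \<and> (\<forall>x\<in>KK. F' (embK Kt x) = embK Kt (g x))"
      and y: "y \<in> Kbar Kt"
    let ?z = "\<lambda>N. embK Kt (y N)"
    have l1: "limitin ?W (F' \<circ> ?z) (F' y) sequentially" using continuous_map_limit[OF _ lim[OF y]] F' by blast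
    have l2: "limitin ?W (E g \<circ> ?z) (E g y) sequentially" using continuous_map_limit[OF Econt[OF g] lim[OF y]] .
    have yN: "y N \<in> KK" for N using Kbar_D[OF y] Kt_KK by blast
    have same: "F' \<circ> ?z = E g \<circ> ?z" using F' Eemb[OF g yN] yN by (auto simp: fun_eq_iff)
    have "F' y \<in> topspace ?W" using F' y topW continuous_map_image_subset_topspace by blast
    then have F'y: "F' y \<in> Kbar Kt" using topW by simp
    have Egy: "E g y \<in> Kbar Kt" using E_Kbar[OF g y] by (simp add: E_def)
    show "F' y = E g y"
    proof (rule separation[OF F'y Egy], intro ballI)
      fix \<xi> assume xi: "\<xi> \<in> KK"
      have "limitin ?A ((\<lambda>y. pairing Kt \<xi> y) \<circ> (F' \<circ> ?z)) (pairing Kt \<xi> (F' y)) sequentially"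
        using continuous_map_limit[OF proj[OF xi] l1] .
      moreover have "limitin ?A ((\<lambda>y. pairing Kt \<xi> y) \<circ> (F' \<circ> ?z)) (pairing Kt \<xi> (E g y)) sequentially"
        using continuous_map_limit[OF proj[OF xi] l2] same by simp
      ultimately show "pairing Kt \<xi> (F' y) = pairing Kt \<xi> (E g y)"
        by (rule limitin_Hausdorff_unique[OF _ _ trivial_limit_sequentially Hausdorff_abs[OF sub na]])
    qed
  next
    fix y show "E id y = y" by (simp add: E_def)
  next
    fix g h y show "E (g \<circ> h) y = E g (E h y)" by (simp add: E_def)
  qed
qed


end
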